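(* Let $\rho\in\mathbb R_+^C$ and $\varepsilon\in\mathbb R_+$ with $\sum_{c=1}^C\widehat p_c\rho_c\le\varepsilon$, and let $w\in\mathcal W$. For each $c$, let $\gamma_c^\star>0$ be a solution of \[\Psi\big(\widehat\theta_c-\gamma^{-1}\lambda(w,\widehat x_c)\big)+\gamma^{-1}\big\langle\nabla\Psi\big(\widehat\theta_c-\gamma^{-1}\lambda(w,\widehat x_c)\big),\lambda(w,\widehat x_c)\big\rangle=\Psi(\widehat\theta_c)-\rho_c,\] set $\theta_c^\star=\widehat\theta_c-\lambda(w,\widehat x_c)/\gamma_c^\star$, let $\mathbb Q^\star_{Y|\widehat x_c}$ be the distribution with density $f(\cdot|\theta_c^\star)$, and $t_c^\star=\Psi(\lambda(w,\widehat x_c))-\langle\nabla\Psi(\theta_c^\star),\lambda(w,\widehat x_c)\rangle$. Let $\alpha^\star\in\mathbb R$, $\beta^\star>0$ solve \[\sum_{c=1}^C\widehat p_c\exp\big(\beta^{-1}(t_c^\star-\alpha)-\rho_c-1\big)-1=0,\qquad\sum_{c=1}^C\widehat p_c(t_c^\star-\alpha)\exp\big(\beta^{-1}(t_c^\star-\alpha)-\rho_c-1\big)-(\varepsilon+1)\beta=0.\] Then the worst-case distribution $\arg\max_{\mathbb Q\in\mathbb B(\widehat{\mathbb P})}\mathbb E_{\mathbb Q}[\ell_\lambda(X,Y,w)]$ is \[\mathbb Q^\star=\sum_{c=1}^C\widehat p_c\exp\big((\beta^\star)^{-1}(t_c^\star-\alpha^\star)-\rho_c-1\big)\,\delta_{\widehat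 x_c}\otimes\mathbb Q^\star_{Y|\widehat x_c},\] i.e. $\mathbb Q^\star\in\mathbb B(\widehat{\mathbb P})$ and $\mathbb E_{\mathbb Q^\star}[\ell_\lambda(X,Y,w)]=\max_{\mathbb Q\in\mathbb B(\widehat{\mathbb P})}\mathbb E_{\mathbb Q}[\ell_\lambda(X,Y,w)]$.
   Context: Exponential family: $\nu$ a measure on $\mathcal Y\subseteq\mathbb R^m$, $h\ge0$, $T:\mathcal Y\to\mathbb R^p$; $f(y|\theta)=h(y)\exp(\langle\theta,T(y)\rangle-\Psi(\theta))$ density w.r.t. $\nu$; $\Theta=\{\theta\in\mathbb R^p:\int he^{\langle\theta,T\rangle}d\nu<\infty\}$, $\Psi(\theta)=\log\int he^{\langle\theta,T\rangle}d\nu$; regular family ($\Theta$ open, $T_i$ affinely independent). $\mathcal X\subseteq\mathbb R^n$, $\mathcal W$ finite-dimensional, $\lambda:\mathcal W\times\mathcal X\to\Theta$ jointly continuous; $\ell_\lambda(x,y,w)=\Psi(\lambda(w,x))-\langle T(y),\lambda(w,x)\rangle$. Distinct $\widehat x_1,\dots,\widehat x_C\in\mathcal X$. Nominal distribution $\widehat{\mathbb P}$: marginal $\sum_c\widehat p_c\delta_{\widehat x_c}$ ($\widehat p\in\mathbb R_+^C$ summing to 1), conditional at $\widehat x_c$ with density $f(\cdot|\widehat\theta_c)$, $\widehat\theta_c\in\Theta$. KL divergence $\mathrm{KL}(\mathbb P_1\|\mathbb P_2)=\mathbb E_{\mathbb P_1}[\log d\mathbb P_1/d\mathbb P_2]$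 if $\mathbb P_1\ll\mathbb P_2$, else $+\infty$. Ambiguity set $\mathbb B(\widehat{\mathbb P})$: all probability measures $\mathbb Q$ on $\mathcal X\times\mathcal Y$ for which there exist a probability measure $\mathbb Q_X$ on $\mathcal X$ and $\theta_c\in\Theta$ such that, with $\mathbb Q_{Y|\widehat x_c}$ having density $f(\cdot|\theta_c)$: $\mathbb Q(\{\widehat x_c\}\times A)=\mathbb Q_X(\{\widehat x_c\})\mathbb Q_{Y|\widehat x_c}(A)$ for all $c$ and measurable $A$; $\mathrm{KL}(\mathbb Q_{Y|\widehat x_c}\|\widehat{\mathbb P}_{Y|\widehat x_c})\le\rho_c$; $\mathrm{KL}(\mathbb Q_X\|\widehat{\mathbb P}_X)+\sum_c\rho_c\mathbb Q_X(\{\widehat x_c\})\le\varepsilon$. *)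

theory Defs
  imports "HOL-Probability.Probability"
begin

definition expfam_norm :: "'y measure \<Rightarrow> ('y \<Rightarrow> real) \<Rightarrow> ('y \<Rightarrow> 'p::real_inner) \<Rightarrow> 'p \<Rightarrow> ennreal" where
  "expfam_norm nu h T \<theta> = (\<integral>\<^sup>+ y. ennreal (h y * exp (\<theta> \<bullet> T y)) \<partial>nu)"

definition expfam_Theta :: "'y measure \<Rightarrow> ('y \<Rightarrow> real) \<Rightarrow> ('y \<Rightarrow> 'p::real_inner) \<Rightarrow> 'p set" where
  "expfam_Theta nu h T = {\<theta>. expfam_norm nu h T \<theta> < \<infinity>}"

definition expfam_Psi :: "'y measure \<Rightarrow> ('y \<Rightarrow> real) \<Rightarrow> ('y \<Rightarrow> 'p::real_inner) \<Rightarrow> 'p \<Rightarrow> real" where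
  "expfam_Psi nu h T \<theta> = ln (enn2real (expfam_norm nu h T \<theta>))"

definition expfam_gradPsi :: "'y measure \<Rightarrow> ('y \<Rightarrow> real) \<Rightarrow> ('y \<Rightarrow> 'p::real_inner) \<Rightarrow> 'p \<Rightarrow> 'p" where
  "expfam_gradPsi nu h T \<theta> = (SOME g. GDERIV (expfam_Psi nu h T) \<theta> :> g)"

definition expfam_dens :: "'y measure \<Rightarrow> ('y \<Rightarrow> real) \<Rightarrow> ('y \<Rightarrow> 'p::real_inner) \<Rightarrow> 'p \<Rightarrow> 'y \<Rightarrow> real" where
  "expfam_dens nu h T \<theta> y = h y * exp (\<theta> \<bullet> T y - expfam_Psi nu h T \<theta>)"

definition expfam_dist :: "'y measure \<Rightarrow> ('y \<Rightarrow> real) \<Rightarrow> ('y \<Rightarrow> 'p::real_inner) \<Rightarrow> 'p \<Rightarrow> 'y measure" where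
  "expfam_dist nu h T \<theta> = density nu (\<lambda>y. ennreal (expfam_dens nu h T \<theta> y))"

text \<open>Regular family: Theta open and the components of T affinely independent, i.e. no
  nontrivial affine relation a . T(y) = b holds almost everywhere w.r.t. h d nu.\<close>
definition regular_expfam :: "'y measure \<Rightarrow> ('y \<Rightarrow> real) \<Rightarrow> ('y \<Rightarrow> 'p::real_inner) \<Rightarrow> bool" where
  "regular_expfam nu h T \<longleftrightarrow> open (expfam_Theta nu h T) \<and>
     (\<forall>a b. (AE y in nu. h y > 0 \<longrightarrow> a \<bullet> T y = b) \<longrightarrow> a = 0)"

definition KL_div :: "'a measure \<Rightarrow> 'a measure \<Rightarrow> ereal" where
  "KL_div P1 P2 =
    (if sets P1 = sets P2 \<and> absolutely_continuous P2 P1 then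
       (let D = (\<lambda>x. ln (enn2real (RN_deriv P2 P1 x))) in
          enn2ereal (\<integral>\<^sup>+ x. ennreal (max 0 (D x)) \<partial>P1)
        - enn2ereal (\<integral>\<^sup>+ x. ennreal (max 0 (- D x)) \<partial>P1))
     else \<infinity>)"

definition ell_loss :: "'y measure \<Rightarrow> ('y \<Rightarrow> real) \<Rightarrow> ('y \<Rightarrow> 'p::real_inner)
    \<Rightarrow> ('w \<Rightarrow> 'x \<Rightarrow> 'p) \<Rightarrow> 'x \<Rightarrow> 'y \<Rightarrow> 'w \<Rightarrow> real" where
  "ell_loss nu h T lam x y w = expfam_Psi nu h T (lam w x) - T y \<bullet> lam w x"

definition nominal_X :: "'x measure \<Rightarrow> nat \<Rightarrow> (nat \<Rightarrow> 'x) \<Rightarrow> (nat \<Rightarrow> real) \<Rightarrow> 'x measure" where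
  "nominal_X MX C xhat phat =
     measure_of (space MX) (sets MX) (\<lambda>A. \<Sum>c<C. ennreal (phat c) * indicator A (xhat c))"

definition ambiguity_set :: "'y measure \<Rightarrow> ('y \<Rightarrow> real) \<Rightarrow> ('y \<Rightarrow> 'p::real_inner) \<Rightarrow> 'x measure
    \<Rightarrow> nat \<Rightarrow> (nat \<Rightarrow> 'x) \<Rightarrow> (nat \<Rightarrow> real) \<Rightarrow> (nat \<Rightarrow> 'p) \<Rightarrow> (nat \<Rightarrow> real) \<Rightarrow> real
    \<Rightarrow> ('x \<times> 'y) measure set" where
  "ambiguity_set nu h T MX C xhat phat thetahat rho eps =
     {Q. prob_space Q \<and> sets Q = sets (MX \<Otimes>\<^sub>M nu) \<and>
        (\<exists>QX \<theta>. prob_space QX \<and> sets QX = sets MX \<and>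
           (\<forall>c<C. \<theta> c \<in> expfam_Theta nu h T) \<and>
           (\<forall>c<C. \<forall>A\<in>sets nu.
               emeasure Q ({xhat c} \<times> A) = emeasure QX {xhat c} * emeasure (expfam_dist nu h T (\<theta> c)) A) \<and>
           (\<forall>c<C. KL_div (expfam_dist nu h T (\<theta> c)) (expfam_dist nu h T (thetahat c)) \<le> ereal (rho c)) \<and>
           KL_div QX (nominal_X MX C xhat phat) + ereal (\<Sum>c<C. rho c * measure QX {xhat c}) \<le> ereal eps)}"

definition mixture_dist :: "'x measure \<Rightarrow> 'y measure \<Rightarrow> nat \<Rightarrow> (nat \<Rightarrow> 'x) \<Rightarrow> (nat \<Rightarrow> real)
    \<Rightarrow> (nat \<Rightarrow> 'y measure) \<Rightarrow> ('x \<times> 'y) measure" where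
  "mixture_dist MX nu C xhat q K =
     measure_of (space (MX \<Otimes>\<^sub>M nu)) (sets (MX \<Otimes>\<^sub>M nu))
       (\<lambda>S. \<Sum>c<C. ennreal (q c) * emeasure (return MX (xhat c) \<Otimes>\<^sub>M K c) S)"

end

theory Submission
  imports Defs
begin

lemma mix_bind:
  fixes q :: "nat \<Rightarrow> real"
  assumes C: "C > 0" and q: "\<forall>c<C. q c \<ge> 0"
   and N: "\<forall>c<C. N c \<in> space (subprob_algebra R)"
   and Ms: "sets M = sets R"
   and Me: "\<forall>S\<in>sets R. emeasure M S = (\<Sum>c<C. ennreal (q c) * emeasure (N c) S)"
  shows "M = point_measure {..<C} (\<lambda>c. ennreal (q c)) \<bind> N"
proof -
  have Nm: "N \<in> measurable (point_measure {..<C} (\<lambda>c. ennreal (q c))) (subprob_algebra R)"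
    unfolding measurable_point_measure_eq1 using N by (simp add: Pi_iff)
  have sp: "space (point_measure {..<C} (\<lambda>c. ennreal (q c))) \<noteq> {}"
    using C by (auto simp: space_point_measure)
  show ?thesis
  proof (rule measure_eqI)
    have "sets (point_measure {..<C} (\<lambda>c. ennreal (q c)) \<bind> N) = sets R"
      using N sp by (intro sets_bind) (auto simp: space_point_measure space_subprob_algebra)
    then show "sets M = sets (point_measure {..<C} (\<lambda>c. ennreal (q c)) \<bind> N)" using Ms by simp
    fix S assume "S \<in> sets M"
    then have S: "S \<in> sets R" using Ms by simp
    have "emeasure (point_measure {..<C} (\<lambda>c. ennreal (q c)) \<bind> N) S
        = (\<integral>\<^sup>+c. emeasure (N c) S \<partial>point_measure {..<C} (\<lambda>c. ennreal (q c)))"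
      using sp Nm S by (rule emeasure_bind)
    also have "\<dots> = (\<Sum>c<C. ennreal (q c) * emeasure (N c) S)"
      by (simp add: nn_integral_point_measure_finite)
    finally show "emeasure M S = emeasure (point_measure {..<C} (\<lambda>c. ennreal (q c)) \<bind> N) S"
      using Me S by simp
  qed
qed

lemma mix_nn:
  fixes q :: "nat \<Rightarrow> real"
  assumes C: "C > 0" and q: "\<forall>c<C. q c \<ge> 0"
   and N: "\<forall>c<C. N c \<in> space (subprob_algebra R)"
   and Ms: "sets M = sets R"
   and Me: "\<forall>S\<in>sets R. emeasure M S = (\<Sum>c<C. ennreal (q c) * emeasure (N c) S)"
   and f: "f \<in> borel_measurable R"
  shows "(\<integral>\<^sup>+x. f x \<partial>M) = (\<Sum>c<C. ennreal (q c) * (\<integral>\<^sup>+x. f x \<partial>N c))"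
proof -
  have Nm: "N \<in> measurable (point_measure {..<C} (\<lambda>c. ennreal (q c))) (subprob_algebra R)"
    unfolding measurable_point_measure_eq1 using N by (simp add: Pi_iff)
  have "(\<integral>\<^sup>+x. f x \<partial>M) = (\<integral>\<^sup>+c. (\<integral>\<^sup>+x. f x \<partial>N c) \<partial>point_measure {..<C} (\<lambda>c. ennreal (q c)))"
    unfolding mix_bind[OF assms(1-5)] by (rule nn_integral_bind[OF f Nm])
  also have "\<dots> = (\<Sum>c<C. ennreal (q c) * (\<integral>\<^sup>+x. f x \<partial>N c))"
    by (intro nn_integral_point_measure_finite) simp
  finally show ?thesis .
qed

lemma mix_integral:
  fixes q :: "nat \<Rightarrow> real" and f :: "'a \<Rightarrow> real"
  assumes C: "C > 0" and q: "\<forall>c<C. q c \<ge> 0"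
   and N: "\<forall>c<C. N c \<in> space (subprob_algebra R)"
   and Ms: "sets M = sets R"
   and Me: "\<forall>S\<in>sets R. emeasure M S = (\<Sum>c<C. ennreal (q c) * emeasure (N c) S)"
   and f: "f \<in> borel_measurable R"
   and fi: "\<forall>c<C. integrable (N c) f"
  shows "integrable M f \<and> (\<integral>x. f x \<partial>M) = (\<Sum>c<C. q c * (\<integral>x. f x \<partial>N c))"
proof -
  have fM: "f \<in> borel_measurable M" using f by (simp add: measurable_cong_sets[OF Ms refl])
  have fin: "enn2real (\<integral>\<^sup>+x. ennreal (g x) \<partial>M) = (\<Sum>c<C. q c * enn2real (\<integral>\<^sup>+x. ennreal (g x) \<partial>N c))"
     "(\<integral>\<^sup>+x. ennreal (g x) \<partial>M) < top"
    if g: "g \<in> borel_measurable R" and gf: "\<forall>c<C. (\<integral>\<^sup>+x. ennreal (g x) \<partial>N c) < top" for g :: "'a \<Rightarrow> real"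
  proof -
    have e: "(\<integral>\<^sup>+x. ennreal (g x) \<partial>M) = (\<Sum>c<C. ennreal (q c) * (\<integral>\<^sup>+x. ennreal (g x) \<partial>N c))"
      using g by (intro mix_nn[OF C q N Ms Me]) measurable
    have lt: "\<And>c. c \<in> {..<C} \<Longrightarrow> ennreal (q c) * (\<integral>\<^sup>+x. ennreal (g x) \<partial>N c) < top"
      using gf by (simp add: ennreal_mult_less_top)
    have "enn2real (\<Sum>c<C. ennreal (q c) * (\<integral>\<^sup>+x. ennreal (g x) \<partial>N c))
        = (\<Sum>c<C. enn2real (ennreal (q c) * (\<integral>\<^sup>+x. ennreal (g x) \<partial>N c)))"
      using enn2real_sum[of "{..<C}" "\<lambda>c. ennreal (q c) * (\<integral>\<^sup>+x. ennreal (g x) \<partial>N c)", OF lt]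
      by (simp add: o_def)
    also have "\<dots> = (\<Sum>c<C. q c * enn2real (\<integral>\<^sup>+x. ennreal (g x) \<partial>N c))"
      using q by (intro sum.cong refl) (simp add: enn2real_mult)
    finally show "enn2real (\<integral>\<^sup>+x. ennreal (g x) \<partial>M) = (\<Sum>c<C. q c * enn2real (\<integral>\<^sup>+x. ennreal (g x) \<partial>N c))"
      using e by simp
    show "(\<integral>\<^sup>+x. ennreal (g x) \<partial>M) < top"
      unfolding e using lt by (simp add: ennreal_sum_less_top)
  qed
  have nf: "\<forall>c<C. (\<integral>\<^sup>+x. ennreal (norm (f x)) \<partial>N c) < top"
  proof (intro allI impI)
    fix c assume "c < C"
    with fi have "integrable (N c) f" by simp
    then show "(\<integral>\<^sup>+x. ennreal (norm (f x)) \<partial>N c) < top"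
      unfolding integrable_iff_bounded infinity_ennreal_def by simp
  qed
  have fnm: "(\<lambda>x. norm (f x)) \<in> borel_measurable R" using f by measurable
  have "(\<integral>\<^sup>+x. ennreal (norm (f x)) \<partial>M) < top"
    by (rule fin(2)[OF fnm nf])
  then have iM: "integrable M f" using fM by (intro integrableI_bounded) (simp_all add: infinity_ennreal_def)
  have pf: "\<forall>c<C. (\<integral>\<^sup>+x. ennreal (f x) \<partial>N c) < top"
  proof safe
    fix c assume "c < C"
    have "(\<integral>\<^sup>+x. ennreal (f x) \<partial>N c) \<le> (\<integral>\<^sup>+x. ennreal (norm (f x)) \<partial>N c)"
      by (intro nn_integral_mono) (auto intro: ennreal_leI)
    then show "(\<integral>\<^sup>+x. ennreal (f x) \<partial>N c) < top" using nf \<open>c < C\<close> by (meson le_less_trans)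
  qed
  have mf: "\<forall>c<C. (\<integral>\<^sup>+x. ennreal (- f x) \<partial>N c) < top"
  proof safe
    fix c assume "c < C"
    have "(\<integral>\<^sup>+x. ennreal (- f x) \<partial>N c) \<le> (\<integral>\<^sup>+x. ennreal (norm (f x)) \<partial>N c)"
      by (intro nn_integral_mono) (auto intro: ennreal_leI)
    then show "(\<integral>\<^sup>+x. ennreal (- f x) \<partial>N c) < top" using nf \<open>c < C\<close> by (meson le_less_trans)
  qed
  have fmm: "(\<lambda>x. - f x) \<in> borel_measurable R" using f by measurable
  have "(\<integral>x. f x \<partial>M) = enn2real (\<integral>\<^sup>+x. f x \<partial>M) - enn2real (\<integral>\<^sup>+x. ennreal (- f x) \<partial>M)"
    using iM by (rule real_lebesgue_integral_def)
  also have "\<dots> = (\<Sum>c<C. q c * enn2real (\<integral>\<^sup>+x. f x \<partial>N c)) - (\<Sum>c<C. q c * enn2real (\<integral>\<^sup>+x. ennreal (- f x) \<partial>N c))"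
    using fin(1)[OF f pf] fin(1)[OF fmm mf] by simp
  also have "\<dots> = (\<Sum>c<C. q c * (enn2real (\<integral>\<^sup>+x. f x \<partial>N c) - enn2real (\<integral>\<^sup>+x. ennreal (- f x) \<partial>N c)))"
    by (simp add: sum_subtractf[symmetric] right_diff_distrib)
  also have "\<dots> = (\<Sum>c<C. q c * (\<integral>x. f x \<partial>N c))"
    using fi by (intro sum.cong refl) (simp add: real_lebesgue_integral_def)
  finally show ?thesis using iM by simp
qed


lemma measure_of_sum_bind:
  fixes q :: "nat \<Rightarrow> real"
  assumes C: "C > 0" and q: "\<forall>c<C. q c \<ge> 0"
   and N: "\<forall>c<C. N c \<in> space (subprob_algebra R)"
  shows "measure_of (space R) (sets R) (\<lambda>S. \<Sum>c<C. ennreal (q c) * emeasure (N c) S)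
       = point_measure {..<C} (\<lambda>c. ennreal (q c)) \<bind> N"
proof -
  let ?P = "point_measure {..<C} (\<lambda>c. ennreal (q c))"
  let ?B = "?P \<bind> N"
  have Nm: "N \<in> measurable ?P (subprob_algebra R)"
    unfolding measurable_point_measure_eq1 using N by (simp add: Pi_iff)
  have sp: "space ?P \<noteq> {}"
    using C by (auto simp: space_point_measure)
  have sB: "sets ?B = sets R"
    using N sp by (intro sets_bind) (auto simp: space_point_measure space_subprob_algebra)
  then have spB: "space ?B = space R" by (rule sets_eq_imp_space_eq)
  have "measure_of (space R) (sets R) (\<lambda>S. \<Sum>c<C. ennreal (q c) * emeasure (N c) S)
      = measure_of (space R) (sets R) (emeasure ?B)"
  proof (rule measure_of_eq)
    show "sets R \<subseteq> Pow (space R)" by (rule sets.space_closed)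
    fix a assume "a \<in> sigma_sets (space R) (sets R)"
    then have a: "a \<in> sets R" by (simp add: sets.sigma_sets_eq)
    have "emeasure ?B a = (\<integral>\<^sup>+c. emeasure (N c) a \<partial>?P)"
      using sp Nm a by (rule emeasure_bind)
    also have "\<dots> = (\<Sum>c<C. ennreal (q c) * emeasure (N c) a)"
      by (intro nn_integral_point_measure_finite) simp
    finally show "(\<Sum>c<C. ennreal (q c) * emeasure (N c) a) = emeasure ?B a" by simp
  qed
  also have "\<dots> = ?B"
    using measure_of_of_measure[of ?B] sB spB by simp
  finally show ?thesis .
qed

lemma bind_point_props:
  fixes q :: "nat \<Rightarrow> real"
  assumes C: "C > 0" and q: "\<forall>c<C. q c \<ge> 0"
   and N: "\<forall>c<C. N c \<in> space (subprob_algebra R)"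
  shows "sets (point_measure {..<C} (\<lambda>c. ennreal (q c)) \<bind> N) = sets R"
    and "\<forall>S\<in>sets R. emeasure (point_measure {..<C} (\<lambda>c. ennreal (q c)) \<bind> N) S
            = (\<Sum>c<C. ennreal (q c) * emeasure (N c) S)"
proof -
  let ?P = "point_measure {..<C} (\<lambda>c. ennreal (q c))"
  have Nm: "N \<in> measurable ?P (subprob_algebra R)"
    unfolding measurable_point_measure_eq1 using N by (simp add: Pi_iff)
  have sp: "space ?P \<noteq> {}"
    using C by (auto simp: space_point_measure)
  show "sets (?P \<bind> N) = sets R"
    using N sp by (intro sets_bind) (auto simp: space_point_measure space_subprob_algebra)
  show "\<forall>S\<in>sets R. emeasure (?P \<bind> N) S = (\<Sum>c<C. ennreal (q c) * emeasure (N c) S)"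
  proof
    fix a assume a: "a \<in> sets R"
    have "emeasure (?P \<bind> N) a = (\<integral>\<^sup>+c. emeasure (N c) a \<partial>?P)"
      using sp Nm a by (rule emeasure_bind)
    also have "\<dots> = (\<Sum>c<C. ennreal (q c) * emeasure (N c) a)"
      by (intro nn_integral_point_measure_finite) simp
    finally show "emeasure (?P \<bind> N) a = (\<Sum>c<C. ennreal (q c) * emeasure (N c) a)" .
  qed
qed

lemma nominal_X_bind:
  fixes p :: "nat \<Rightarrow> real"
  assumes C: "C > 0" and p: "\<forall>c<C. p c \<ge> 0" and x: "\<forall>c<C. xhat c \<in> space MX"
  shows "nominal_X MX C xhat p = point_measure {..<C} (\<lambda>c. ennreal (p c)) \<bind> (\<lambda>c. return MX (xhat c))"
proof -
  have N: "\<forall>c<C. return MX (xhat c) \<in> space (subprob_algebra MX)"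
    using x by (auto simp: space_subprob_algebra intro: prob_space_imp_subprob_space prob_space_return)
  have "nominal_X MX C xhat p = measure_of (space MX) (sets MX) (\<lambda>S. \<Sum>c<C. ennreal (p c) * emeasure (return MX (xhat c)) S)"
    unfolding nominal_X_def
  proof (rule measure_of_eq)
    show "sets MX \<subseteq> Pow (space MX)" by (rule sets.space_closed)
    fix a assume "a \<in> sigma_sets (space MX) (sets MX)"
    then have a: "a \<in> sets MX" by (simp add: sets.sigma_sets_eq)
    show "(\<Sum>c<C. ennreal (p c) * indicator a (xhat c)) = (\<Sum>c<C. ennreal (p c) * emeasure (return MX (xhat c)) a)"
      using a by (intro sum.cong refl) (simp add: emeasure_return)
  qed
  also have "\<dots> = point_measure {..<C} (\<lambda>c. ennreal (p c)) \<bind> (\<lambda>c. return MX (xhat c))"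
    by (rule measure_of_sum_bind[OF C p N])
  finally show ?thesis .
qed

lemma mixture_bind:
  fixes q :: "nat \<Rightarrow> real"
  assumes C: "C > 0" and q: "\<forall>c<C. q c \<ge> 0" and x: "\<forall>c<C. xhat c \<in> space MX"
    and K: "\<forall>c<C. prob_space (K c) \<and> sets (K c) = sets nu"
  shows "mixture_dist MX nu C xhat q K = point_measure {..<C} (\<lambda>c. ennreal (q c)) \<bind> (\<lambda>c. return MX (xhat c) \<Otimes>\<^sub>M K c)"
    and "\<forall>c<C. return MX (xhat c) \<Otimes>\<^sub>M K c \<in> space (subprob_algebra (MX \<Otimes>\<^sub>M nu))"
proof -
  show N: "\<forall>c<C. return MX (xhat c) \<Otimes>\<^sub>M K c \<in> space (subprob_algebra (MX \<Otimes>\<^sub>M nu))"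
  proof safe
    fix c assume c: "c < C"
    have "prob_space (return MX (xhat c) \<Otimes>\<^sub>M K c)"
      using K x c by (intro prob_space_pair prob_space_return) auto
    moreover have "sets (return MX (xhat c) \<Otimes>\<^sub>M K c) = sets (MX \<Otimes>\<^sub>M nu)"
      using K c by (intro sets_pair_measure_cong) auto
    ultimately show "return MX (xhat c) \<Otimes>\<^sub>M K c \<in> space (subprob_algebra (MX \<Otimes>\<^sub>M nu))"
      by (auto simp: space_subprob_algebra intro: prob_space_imp_subprob_space)
  qed
  show "mixture_dist MX nu C xhat q K = point_measure {..<C} (\<lambda>c. ennreal (q c)) \<bind> (\<lambda>c. return MX (xhat c) \<Otimes>\<^sub>M K c)"
    unfolding mixture_dist_def by (rule measure_of_sum_bind[OF C q N])
qed


locale ef =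
  fixes nu :: "'y measure" and h :: "'y \<Rightarrow> real" and T :: "'y \<Rightarrow> 'p::euclidean_space"
  assumes h_meas[measurable]: "h \<in> borel_measurable nu" and h_nonneg: "\<forall>y\<in>space nu. h y \<ge> 0"
    and T_meas[measurable]: "T \<in> borel_measurable nu" and regular: "regular_expfam nu h T"
begin

definition Zr where "Zr \<theta> = enn2real (expfam_norm nu h T \<theta>)"
abbreviation "Th \<equiv> expfam_Theta nu h T"
abbreviation "Ps \<equiv> expfam_Psi nu h T"
abbreviation "D \<equiv> expfam_dist nu h T"
abbreviation "dens \<equiv> expfam_dens nu h T"

lemma g_meas[measurable]: "(\<lambda>y. h y * exp (\<theta> \<bullet> T y)) \<in> borel_measurable nu"
  by measurable

lemma Z_int:
  assumes "\<theta> \<in> Th"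
  shows "integrable nu (\<lambda>y. h y * exp (\<theta> \<bullet> T y))" "Zr \<theta> = (\<integral>y. h y * exp (\<theta> \<bullet> T y) \<partial>nu)"
proof -
  have ae: "AE y in nu. 0 \<le> h y * exp (\<theta> \<bullet> T y)"
    using h_nonneg by (intro AE_I2) simp
  have fin: "(\<integral>\<^sup>+y. ennreal (h y * exp (\<theta> \<bullet> T y)) \<partial>nu) < \<infinity>"
    using assms by (simp add: expfam_Theta_def expfam_norm_def)
  show i: "integrable nu (\<lambda>y. h y * exp (\<theta> \<bullet> T y))"
    by (rule integrableI_nonneg[OF g_meas ae fin])
  have "expfam_norm nu h T \<theta> = ennreal (\<integral>y. h y * exp (\<theta> \<bullet> T y) \<partial>nu)"
    unfolding expfam_norm_def by (rule nn_integral_eq_integral[OF i ae])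
  moreover have "(\<integral>y. h y * exp (\<theta> \<bullet> T y) \<partial>nu) \<ge> 0"
    by (rule integral_nonneg_AE[OF ae])
  ultimately show "Zr \<theta> = (\<integral>y. h y * exp (\<theta> \<bullet> T y) \<partial>nu)"
    by (simp add: Zr_def)
qed

lemma Z_pos:
  assumes "\<theta> \<in> Th"
  shows "Zr \<theta> > 0"
proof -
  have ae: "AE y in nu. 0 \<le> h y * exp (\<theta> \<bullet> T y)"
    using h_nonneg by (intro AE_I2) simp
  have ge: "Zr \<theta> \<ge> 0" unfolding Z_int(2)[OF assms] by (rule integral_nonneg_AE[OF ae])
  show ?thesis
  proof (rule ccontr)
    assume "\<not> Zr \<theta> > 0"
    then have "(\<integral>y. h y * exp (\<theta> \<bullet> T y) \<partial>nu) = 0" using ge Z_int(2)[OF assms] by simp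
    then have "AE y in nu. h y * exp (\<theta> \<bullet> T y) = 0"
      using integral_nonneg_eq_0_iff_AE[OF Z_int(1)[OF assms] ae] by simp
    then have "AE y in nu. h y > 0 \<longrightarrow> (SOME b. b \<in> Basis) \<bullet> T y = 0"
      by eventually_elim simp
    then have "(SOME b::'p. b \<in> Basis) = 0"
      using regular unfolding regular_expfam_def by blast
    moreover have "(SOME b::'p. b \<in> Basis) \<in> Basis"
      by (rule someI_ex) (use nonempty_Basis in blast)
    ultimately show False using nonzero_Basis by metis
  qed
qed

lemma Psi_eq: "Ps \<theta> = ln (Zr \<theta>)"
  by (simp add: expfam_Psi_def Zr_def)

lemma dens_eq:
  assumes "\<theta> \<in> Th"
  shows "dens \<theta> y = h y * exp (\<theta> \<bullet> T y) / Zr \<theta>"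
  using Z_pos[OF assms] by (simp add: expfam_dens_def Psi_eq exp_diff)

lemma dens_meas[measurable]: "dens \<theta> \<in> borel_measurable nu"
  unfolding expfam_dens_def by measurable

lemma dens_nonneg: "y \<in> space nu \<Longrightarrow> dens \<theta> y \<ge> 0"
  using h_nonneg by (simp add: expfam_dens_def)

lemma sets_D[measurable_cong]: "sets (D \<theta>) = sets nu"
  by (simp add: expfam_dist_def)

lemma space_D: "space (D \<theta>) = space nu"
  by (simp add: expfam_dist_def)

lemma D_integral:
  fixes f :: "'y \<Rightarrow> real"
  assumes [measurable]: "f \<in> borel_measurable nu"
  shows "integrable (D \<theta>) f \<longleftrightarrow> integrable nu (\<lambda>y. dens \<theta> y * f y)"
    and "(\<integral>y. f y \<partial>D \<theta>) = (\<integral>y. dens \<theta> y * f y \<partial>nu)"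
proof -
  have ae: "AE y in nu. 0 \<le> dens \<theta> y" using dens_nonneg by (intro AE_I2) simp
  show "integrable (D \<theta>) f \<longleftrightarrow> integrable nu (\<lambda>y. dens \<theta> y * f y)"
    unfolding expfam_dist_def by (rule integrable_real_density[OF dens_meas ae assms])
  show "(\<integral>y. f y \<partial>D \<theta>) = (\<integral>y. dens \<theta> y * f y \<partial>nu)"
    unfolding expfam_dist_def by (rule integral_real_density[OF dens_meas ae assms])
qed

lemma mgf:
  assumes th: "\<theta> \<in> Th" and tha: "\<theta> + a \<in> Th"
  shows "integrable (D \<theta>) (\<lambda>y. exp (a \<bullet> T y))"
    and "(\<integral>y. exp (a \<bullet> T y) \<partial>D \<theta>) = Zr (\<theta> + a) / Zr \<theta>"
proof -
  have eq: "dens \<theta> y * exp (a \<bullet> T y) = h y * exp ((\<theta> + a) \<bullet> T y) / Zr \<theta>" for y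
    by (simp add: dens_eq[OF th] inner_add_left exp_add)
  have m: "(\<lambda>y. exp (a \<bullet> T y)) \<in> borel_measurable nu" by measurable
  show "integrable (D \<theta>) (\<lambda>y. exp (a \<bullet> T y))"
    unfolding D_integral(1)[OF m] eq using Z_int(1)[OF tha] by simp
  show "(\<integral>y. exp (a \<bullet> T y) \<partial>D \<theta>) = Zr (\<theta> + a) / Zr \<theta>"
    unfolding D_integral(2)[OF m] eq using Z_int(2)[OF tha] by simp
qed

lemma D_prob:
  assumes th: "\<theta> \<in> Th"
  shows "prob_space (D \<theta>)"
proof (rule prob_spaceI)
  have "emeasure (D \<theta>) (space (D \<theta>)) = (\<integral>\<^sup>+y. ennreal (dens \<theta> y) * indicator (space nu) y \<partial>nu)"
    unfolding expfam_dist_def by (simp add: emeasure_density)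
  also have "\<dots> = (\<integral>\<^sup>+y. ennreal (dens \<theta> y * exp (0 \<bullet> T y)) \<partial>nu)"
    by (intro nn_integral_cong) simp
  also have "\<dots> = ennreal (\<integral>y. dens \<theta> y * exp (0 \<bullet> T y) \<partial>nu)"
  proof (rule nn_integral_eq_integral)
    have m: "(\<lambda>y. exp (0 \<bullet> T y)) \<in> borel_measurable nu" by measurable
    show "integrable nu (\<lambda>y. dens \<theta> y * exp (0 \<bullet> T y))"
      using mgf(1)[of \<theta> 0] th D_integral(1)[OF m] by simp
    show "AE y in nu. 0 \<le> dens \<theta> y * exp (0 \<bullet> T y)" using dens_nonneg by (intro AE_I2) simp
  qed
  also have "(\<integral>y. dens \<theta> y * exp (0 \<bullet> T y) \<partial>nu) = 1"
  proof -
    have m: "(\<lambda>y. exp (0 \<bullet> T y)) \<in> borel_measurable nu" by measurable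
    have "(\<integral>y. dens \<theta> y * exp (0 \<bullet> T y) \<partial>nu) = Zr (\<theta> + 0) / Zr \<theta>"
      using mgf(2)[of \<theta> 0] th D_integral(2)[OF m] by simp
    then show ?thesis using Z_pos[OF th] by simp
  qed
  finally show "emeasure (D \<theta>) (space (D \<theta>)) = 1" by simp
qed

end

lemma taylor_exp_bound:
  fixes y s t \<delta> :: real
  assumes y: "\<bar>y\<bar> \<le> s * t" and s: "0 \<le> s" "s \<le> \<delta> / 2" and t: "0 \<le> t" and d: "\<delta> > 0"
  shows "exp y - 1 - y \<le> s\<^sup>2 * (8 / \<delta>\<^sup>2) * exp (\<delta> * t)"
proof -
  obtain \<xi> where xi: "\<bar>\<xi>\<bar> \<le> \<bar>y\<bar>" and e: "exp y = (\<Sum>m<2. y ^ m / fact m) + exp \<xi> / fact 2 * y ^ 2"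
    using Maclaurin_exp_le[of y 2] by blast
  have e2: "exp y - 1 - y = exp \<xi> / 2 * y\<^sup>2"
    using e by (simp add: numeral_2_eq_2)
  have "exp \<xi> \<le> exp (\<delta> * t / 2)"
  proof -
    have "\<xi> \<le> s * t" using xi y by linarith
    also have "s * t \<le> \<delta> / 2 * t" using s t by (intro mult_right_mono) auto
    finally show ?thesis by simp
  qed
  moreover have "y\<^sup>2 \<le> s\<^sup>2 * t\<^sup>2"
  proof -
    have "\<bar>y\<bar>\<^sup>2 \<le> (s * t)\<^sup>2" using y by (intro power_mono) auto
    then show ?thesis by (simp add: power_mult_distrib)
  qed
  moreover have "t\<^sup>2 \<le> 16 / \<delta>\<^sup>2 * exp (\<delta> * t / 2)"
  proof -
    have a: "\<delta> * t / 4 \<le> exp (\<delta> * t / 4)" using exp_ge_add_one_self[of "\<delta> * t / 4"] by linarith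
    have "(\<delta> * t / 4)\<^sup>2 \<le> (exp (\<delta> * t / 4))\<^sup>2" using a d t by (intro power_mono) auto
    also have "(exp (\<delta> * t / 4))\<^sup>2 = exp (\<delta> * t / 2)"
      by (simp add: power2_eq_square exp_add[symmetric])
    finally have "\<delta>\<^sup>2 * t\<^sup>2 / 16 \<le> exp (\<delta> * t / 2)" by (simp add: power_mult_distrib power_divide)
    then show ?thesis using d by (simp add: field_simps)
  qed
  ultimately have "exp \<xi> / 2 * y\<^sup>2 \<le> exp (\<delta> * t / 2) / 2 * (s\<^sup>2 * (16 / \<delta>\<^sup>2 * exp (\<delta> * t / 2)))"
  proof -
    assume A: "exp \<xi> \<le> exp (\<delta> * t / 2)" and B: "y\<^sup>2 \<le> s\<^sup>2 * t\<^sup>2" and Cc: "t\<^sup>2 \<le> 16 / \<delta>\<^sup>2 * exp (\<delta> * t / 2)"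
    have "y\<^sup>2 \<le> s\<^sup>2 * (16 / \<delta>\<^sup>2 * exp (\<delta> * t / 2))"
      using B Cc by (meson mult_left_mono order_trans zero_le_power2)
    then show ?thesis using A by (intro mult_mono) auto
  qed
  also have "\<dots> = s\<^sup>2 * (8 / \<delta>\<^sup>2) * (exp (\<delta> * t / 2) * exp (\<delta> * t / 2))"
    by (simp add: field_simps)
  also have "exp (\<delta> * t / 2) * exp (\<delta> * t / 2) = exp (\<delta> * t)"
    by (simp add: exp_add[symmetric])
  finally show ?thesis using e2 by simp
qed

context ef begin

lemma interior_Th:
  assumes "\<theta> \<in> Th"
  shows "\<exists>r>0. \<forall>v. norm v \<le> r \<longrightarrow> \<theta> + v \<in> Th"
proof -
  have "open Th" using regular by (simp add: regular_expfam_def)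
  then obtain e where e: "e > 0" "ball \<theta> e \<subseteq> Th" using assms by (meson openE)
  show ?thesis
  proof (intro exI[of _ "e/2"] conjI allI impI)
    fix v :: 'p assume "norm v \<le> e / 2"
    then have "\<theta> + v \<in> ball \<theta> e" using e by (simp add: dist_norm)
    then show "\<theta> + v \<in> Th" using e by blast
  qed (use e in simp)
qed

lemma exp_abs_int:
  assumes "\<theta> \<in> Th" "\<theta> + a \<in> Th" "\<theta> + (- a) \<in> Th"
  shows "integrable (D \<theta>) (\<lambda>y. exp \<bar>a \<bullet> T y\<bar>)"
proof (rule Bochner_Integration.integrable_bound)
  show "integrable (D \<theta>) (\<lambda>y. exp (a \<bullet> T y) + exp ((- a) \<bullet> T y))"
    using mgf(1)[OF assms(1,2)] mgf(1)[OF assms(1,3)] by simp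
  show "(\<lambda>y. exp \<bar>a \<bullet> T y\<bar>) \<in> borel_measurable (D \<theta>)" by measurable
  show "AE y in D \<theta>. norm (exp \<bar>a \<bullet> T y\<bar>) \<le> norm (exp (a \<bullet> T y) + exp ((- a) \<bullet> T y))"
  proof (intro AE_I2)
    fix y
    have "exp \<bar>a \<bullet> T y\<bar> \<le> exp (a \<bullet> T y) + exp ((- a) \<bullet> T y)"
      by (cases "a \<bullet> T y \<ge> 0") (auto simp: add_increasing add_increasing2)
    then show "norm (exp \<bar>a \<bullet> T y\<bar>) \<le> norm (exp (a \<bullet> T y) + exp ((- a) \<bullet> T y))" by simp
  qed
qed

lemma basis_exp_int:
  assumes th: "\<theta> \<in> Th" and r: "\<forall>v. norm v \<le> r \<longrightarrow> \<theta> + v \<in> Th" and r0: "r \<ge> 0" and e: "e \<in> Basis"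
  shows "integrable (D \<theta>) (\<lambda>y. exp \<bar>(r *\<^sub>R e) \<bullet> T y\<bar>)"
  using e r0 by (intro exp_abs_int th r[rule_format]) (auto simp: norm_Basis)

lemma T_int:
  assumes th: "\<theta> \<in> Th"
  shows "integrable (D \<theta>) T"
proof -
  obtain r where r: "r > 0" "\<forall>v. norm v \<le> r \<longrightarrow> \<theta> + v \<in> Th" using interior_Th[OF th] by blast
  show ?thesis
  proof (rule Bochner_Integration.integrable_bound)
    show "integrable (D \<theta>) (\<lambda>y. \<Sum>e\<in>Basis. exp \<bar>(r *\<^sub>R e) \<bullet> T y\<bar> / r)"
      using basis_exp_int[OF th r(2)] r(1) by (intro Bochner_Integration.integrable_sum integrable_divide) auto
    show "T \<in> borel_measurable (D \<theta>)" by measurable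
    show "AE y in D \<theta>. norm (T y) \<le> norm (\<Sum>e\<in>Basis. exp \<bar>(r *\<^sub>R e) \<bullet> T y\<bar> / r)"
    proof (intro AE_I2)
      fix y
      have "norm (T y) \<le> (\<Sum>e\<in>Basis. \<bar>T y \<bullet> e\<bar>)" by (rule norm_le_l1)
      also have "\<dots> \<le> (\<Sum>e\<in>Basis. exp \<bar>(r *\<^sub>R e) \<bullet> T y\<bar> / r)"
      proof (intro sum_mono)
        fix e :: 'p assume "e \<in> Basis"
        have "\<bar>(r *\<^sub>R e) \<bullet> T y\<bar> \<le> exp \<bar>(r *\<^sub>R e) \<bullet> T y\<bar>"
          using exp_ge_add_one_self[of "\<bar>(r *\<^sub>R e) \<bullet> T y\<bar>"] by linarith
        moreover have "\<bar>(r *\<^sub>R e) \<bullet> T y\<bar> = r * \<bar>T y \<bullet> e\<bar>"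
          using r(1) by (simp add: abs_mult inner_commute)
        ultimately show "\<bar>T y \<bullet> e\<bar> \<le> exp \<bar>(r *\<^sub>R e) \<bullet> T y\<bar> / r"
          using r(1) by (simp add: field_simps)
      qed
      also have "\<dots> \<le> norm (\<Sum>e\<in>Basis. exp \<bar>(r *\<^sub>R e) \<bullet> T y\<bar> / r)" by simp
      finally show "norm (T y) \<le> norm (\<Sum>e\<in>Basis. exp \<bar>(r *\<^sub>R e) \<bullet> T y\<bar> / r)" .
    qed
  qed
qed

definition mean where "mean \<theta> = (\<integral>y. T y \<partial>D \<theta>)"

lemma inner_mean:
  assumes th: "\<theta> \<in> Th"
  shows "integrable (D \<theta>) (\<lambda>y. v \<bullet> T y)" "(\<integral>y. v \<bullet> T y \<partial>D \<theta>) = v \<bullet> mean \<theta>"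
   apply (intro integrable_inner_right) apply (rule T_int[OF th])
  unfolding mean_def apply (rule integral_inner_right) by (rule T_int[OF th])

lemma expnorm_int:
  assumes th: "\<theta> \<in> Th"
  shows "\<exists>\<delta>>0. integrable (D \<theta>) (\<lambda>y. exp (\<delta> * norm (T y)))"
proof -
  obtain r where r: "r > 0" "\<forall>v. norm v \<le> r \<longrightarrow> \<theta> + v \<in> Th" using interior_Th[OF th] by blast
  define n where "n = real DIM('p)"
  have n: "n \<ge> 1" unfolding n_def using DIM_positive[where 'a='p] by linarith
  define \<delta> where "\<delta> = r / n"
  have d: "\<delta> > 0" using r n by (simp add: \<delta>_def)
  show ?thesis
  proof (intro exI[of _ \<delta>] conjI d)
   show "integrable (D \<theta>) (\<lambda>y. exp (\<delta> * norm (T y)))"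
   proof (rule Bochner_Integration.integrable_bound)
    show "integrable (D \<theta>) (\<lambda>y. \<Sum>e\<in>Basis. exp \<bar>(r *\<^sub>R e) \<bullet> T y\<bar>)"
      using basis_exp_int[OF th r(2)] r(1) by (intro Bochner_Integration.integrable_sum) auto
    show "(\<lambda>y. exp (\<delta> * norm (T y))) \<in> borel_measurable (D \<theta>)" by measurable
    show "AE y in D \<theta>. norm (exp (\<delta> * norm (T y))) \<le> norm (\<Sum>e\<in>Basis. exp \<bar>(r *\<^sub>R e) \<bullet> T y\<bar>)"
    proof (intro AE_I2)
      fix y
      define f where "f e = \<bar>T y \<bullet> e\<bar>" for e
      have fin: "finite (f ` Basis)" "f ` Basis \<noteq> {}" by auto
      obtain e0 where e0: "e0 \<in> Basis" "f e0 = Max (f ` Basis)"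
        using Max_in[OF fin] by (metis imageE)
      have le: "\<forall>e\<in>Basis. f e \<le> f e0" using e0 fin by auto
      have "norm (T y) \<le> (\<Sum>e\<in>Basis. f e)" unfolding f_def by (rule norm_le_l1)
      also have "\<dots> \<le> n * f e0"
        using sum_bounded_above[of Basis f "f e0"] le by (simp add: n_def)
      finally have "\<delta> * norm (T y) \<le> \<delta> * (n * f e0)" using d by (intro mult_left_mono) auto
      also have "\<delta> * (n * f e0) = \<bar>(r *\<^sub>R e0) \<bullet> T y\<bar>"
      proof -
        have "(r *\<^sub>R e0) \<bullet> T y = r * (T y \<bullet> e0)" by (simp add: inner_commute)
        then have "\<bar>(r *\<^sub>R e0) \<bullet> T y\<bar> = r * f e0" using r(1) by (simp add: f_def abs_mult)
        moreover have "\<delta> * (n * f e0) = r * f e0" using n by (simp add: \<delta>_def)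
        ultimately show ?thesis by simp
      qed
      finally have "exp (\<delta> * norm (T y)) \<le> exp \<bar>(r *\<^sub>R e0) \<bullet> T y\<bar>" by simp
      also have "\<dots> \<le> (\<Sum>e\<in>Basis. exp \<bar>(r *\<^sub>R e) \<bullet> T y\<bar>)"
        using e0(1) by (intro member_le_sum) auto
      finally show "norm (exp (\<delta> * norm (T y))) \<le> norm (\<Sum>e\<in>Basis. exp \<bar>(r *\<^sub>R e) \<bullet> T y\<bar>)"
        by simp
    qed
   qed
  qed
qed

end

context ef begin

lemma remainder:
  assumes th: "\<theta> \<in> Th"
  shows "\<exists>r>0. \<exists>K. \<forall>v. norm v \<le> r \<longrightarrow> \<bar>Ps (\<theta> + v) - Ps \<theta> - v \<bullet> mean \<theta>\<bar> \<le> K * (norm v)\<^sup>2"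
proof -
  obtain \<delta> where d: "\<delta> > 0" and di: "integrable (D \<theta>) (\<lambda>y. exp (\<delta> * norm (T y)))"
    using expnorm_int[OF th] by blast
  obtain r0 where r0: "r0 > 0" "\<forall>v. norm v \<le> r0 \<longrightarrow> \<theta> + v \<in> Th" using interior_Th[OF th] by blast
  interpret P: prob_space "D \<theta>" by (rule D_prob[OF th])
  define B where "B = (\<integral>y. exp (\<delta> * norm (T y)) \<partial>D \<theta>)"
  have B: "B \<ge> 0" unfolding B_def by (intro integral_nonneg_AE) simp
  define K1 where "K1 = 8 / \<delta>\<^sup>2 * B"
  have K1: "K1 \<ge> 0" using B d by (simp add: K1_def)
  define mm where "mm = norm (mean \<theta>)"
  have mm: "mm \<ge> 0" by (simp add: mm_def)
  define r where "r = min (min r0 (\<delta>/2)) (min 1 (1/(4*(mm+K1+1))))"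
  have r: "r > 0" using r0 d mm K1 by (simp add: r_def)
  have main: "\<forall>v. norm v \<le> r \<longrightarrow> \<bar>Ps (\<theta> + v) - Ps \<theta> - v \<bullet> mean \<theta>\<bar> \<le> (2*(mm+K1)\<^sup>2 + K1) * (norm v)\<^sup>2"
  proof (intro allI impI)
    fix v :: 'p assume nv: "norm v \<le> r"
    have tv: "\<theta> + v \<in> Th" using r0 nv by (simp add: r_def)
    have nv1: "norm v \<le> 1" "norm v \<le> \<delta>/2" "norm v \<le> r0" "norm v \<le> 1/(4*(mm+K1+1))"
      using nv by (auto simp: r_def)
    have iE: "integrable (D \<theta>) (\<lambda>y. exp (v \<bullet> T y))" by (rule mgf(1)[OF th tv])
    have iI: "integrable (D \<theta>) (\<lambda>y. v \<bullet> T y)" by (rule inner_mean(1)[OF th])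
    have iR: "integrable (D \<theta>) (\<lambda>y. exp (v \<bullet> T y) - 1 - v \<bullet> T y)"
      using iE iI by (intro Bochner_Integration.integrable_diff) auto
    define R where "R = (\<integral>y. exp (v \<bullet> T y) - 1 - v \<bullet> T y \<partial>D \<theta>)"
    have R_eq: "R = Zr (\<theta> + v) / Zr \<theta> - 1 - v \<bullet> mean \<theta>"
    proof -
      have "R = (\<integral>y. exp (v \<bullet> T y) - 1 \<partial>D \<theta>) - (\<integral>y. v \<bullet> T y \<partial>D \<theta>)"
        unfolding R_def using iE iI by (intro Bochner_Integration.integral_diff) auto
      also have "(\<integral>y. exp (v \<bullet> T y) - 1 \<partial>D \<theta>) = (\<integral>y. exp (v \<bullet> T y) \<partial>D \<theta>) - (\<integral>y. 1 \<partial>D \<theta>)"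
        using iE by (intro Bochner_Integration.integral_diff) auto
      also have "(\<integral>y. (1::real) \<partial>D \<theta>) = 1" using lebesgue_integral_const[of "D \<theta>" "1::real"] P.prob_space by simp
      finally show ?thesis using mgf(2)[OF th tv] inner_mean(2)[OF th] by simp
    qed
    have R_nonneg: "0 \<le> R"
      unfolding R_def by (intro integral_nonneg_AE AE_I2) (use exp_ge_add_one_self in \<open>smt (verit)\<close>)
    have R_le: "R \<le> (norm v)\<^sup>2 * K1"
    proof -
      have "R \<le> (\<integral>y. (norm v)\<^sup>2 * (8 / \<delta>\<^sup>2) * exp (\<delta> * norm (T y)) \<partial>D \<theta>)"
        unfolding R_def
      proof (rule integral_mono[OF iR])
        show "integrable (D \<theta>) (\<lambda>y. (norm v)\<^sup>2 * (8 / \<delta>\<^sup>2) * exp (\<delta> * norm (T y)))"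
          using di by simp
        fix y
        show "exp (v \<bullet> T y) - 1 - v \<bullet> T y \<le> (norm v)\<^sup>2 * (8 / \<delta>\<^sup>2) * exp (\<delta> * norm (T y))"
          by (rule taylor_exp_bound[OF Cauchy_Schwarz_ineq2 _ nv1(2) _ d]) auto
      qed
      also have "\<dots> = (norm v)\<^sup>2 * K1" by (simp add: K1_def B_def)
      finally show ?thesis .
    qed
    define x where "x = v \<bullet> mean \<theta> + R"
    have vm: "\<bar>v \<bullet> mean \<theta>\<bar> \<le> norm v * mm" unfolding mm_def by (rule Cauchy_Schwarz_ineq2)
    have nv2: "(norm v)\<^sup>2 \<le> norm v" using nv1(1) by (simp add: power2_eq_square mult_left_le)
    have xb: "\<bar>x\<bar> \<le> norm v * (mm + K1)"
    proof -
      have "\<bar>x\<bar> \<le> norm v * mm + (norm v)\<^sup>2 * K1" unfolding x_def using vm R_nonneg R_le by linarith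
      also have "(norm v)\<^sup>2 * K1 \<le> norm v * K1" using nv2 K1 by (intro mult_right_mono) auto
      finally show ?thesis by (simp add: algebra_simps)
    qed
    have xh: "\<bar>x\<bar> \<le> 1/2"
    proof -
      have "norm v * (mm + K1) \<le> norm v * (mm + K1 + 1)" by (intro mult_left_mono) auto
      also have "\<dots> \<le> 1/(4*(mm+K1+1)) * (mm + K1 + 1)"
        using nv1(4) mm K1 by (intro mult_right_mono) auto
      also have "\<dots> = 1/4" using mm K1 by simp
      finally show ?thesis using xb by linarith
    qed
    have Zq: "Zr (\<theta> + v) / Zr \<theta> = 1 + x" using R_eq by (simp add: x_def)
    have lnq: "Ps (\<theta> + v) - Ps \<theta> = ln (1 + x)"
      using Z_pos[OF th] Z_pos[OF tv] Zq[symmetric] by (simp add: Psi_eq ln_div)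
    have lb: "\<bar>ln (1 + x) - x\<bar> \<le> 2 * x\<^sup>2" by (rule abs_ln_one_plus_x_minus_x_bound[OF xh])
    have x2: "x\<^sup>2 \<le> (norm v * (mm + K1))\<^sup>2"
    proof -
      have "\<bar>x\<bar>\<^sup>2 \<le> (norm v * (mm + K1))\<^sup>2" using xb by (intro power_mono) auto
      then show ?thesis by simp
    qed
    have "\<bar>Ps (\<theta> + v) - Ps \<theta> - v \<bullet> mean \<theta>\<bar> = \<bar>(ln (1 + x) - x) + R\<bar>"
      using lnq by (simp add: x_def)
    also have "\<dots> \<le> 2 * x\<^sup>2 + (norm v)\<^sup>2 * K1" using lb R_nonneg R_le by linarith
    also have "\<dots> \<le> 2 * (norm v * (mm + K1))\<^sup>2 + (norm v)\<^sup>2 * K1" using x2 by linarith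
    also have "\<dots> = (2*(mm+K1)\<^sup>2 + K1) * (norm v)\<^sup>2" by (simp add: power2_eq_square algebra_simps)
    finally show "\<bar>Ps (\<theta> + v) - Ps \<theta> - v \<bullet> mean \<theta>\<bar> \<le> (2*(mm+K1)\<^sup>2 + K1) * (norm v)\<^sup>2" .
  qed
  then show ?thesis using r by blast
qed

lemma grad:
  assumes th: "\<theta> \<in> Th"
  shows "(Ps has_derivative (\<lambda>h. h \<bullet> mean \<theta>)) (at \<theta>)"
  unfolding has_derivative_at_alt
proof (intro conjI allI impI)
  show "bounded_linear (\<lambda>h. h \<bullet> mean \<theta>)" by (rule bounded_linear_inner_left)
  fix e :: real assume e: "e > 0"
  obtain r K where r: "r > 0" and K: "\<forall>v. norm v \<le> r \<longrightarrow> \<bar>Ps (\<theta> + v) - Ps \<theta> - v \<bullet> mean \<theta>\<bar> \<le> K * (norm v)\<^sup>2"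
    using remainder[OF th] by blast
  define K' where "K' = max K 1"
  have K': "K' > 0" "K \<le> K'" by (auto simp: K'_def)
  show "\<exists>d>0. \<forall>y. norm (y - \<theta>) < d \<longrightarrow> norm (Ps y - Ps \<theta> - (y - \<theta>) \<bullet> mean \<theta>) \<le> e * norm (y - \<theta>)"
  proof (intro exI[of _ "min r (e / K')"] conjI allI impI)
    show "min r (e / K') > 0" using r e K' by simp
    fix y assume y: "norm (y - \<theta>) < min r (e / K')"
    define v where "v = y - \<theta>"
    have yv: "y = \<theta> + v" by (simp add: v_def)
    have nv: "norm v \<le> r" "norm v \<le> e / K'" using y by (auto simp: v_def)
    have "\<bar>Ps (\<theta> + v) - Ps \<theta> - v \<bullet> mean \<theta>\<bar> \<le> K * (norm v)\<^sup>2" using K nv by blast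
    also have "\<dots> \<le> K' * (norm v)\<^sup>2" using K' by (intro mult_right_mono) auto
    also have "\<dots> = (K' * norm v) * norm v" by (simp add: power2_eq_square)
    also have "\<dots> \<le> e * norm v"
    proof (intro mult_right_mono)
      show "K' * norm v \<le> e" using nv(2) K' by (simp add: field_simps)
    qed simp
    finally show "norm (Ps y - Ps \<theta> - (y - \<theta>) \<bullet> mean \<theta>) \<le> e * norm (y - \<theta>)"
      by (simp only: yv add_diff_cancel_left' real_norm_def)
  qed
qed

lemma gradPsi_eq:
  assumes th: "\<theta> \<in> Th"
  shows "expfam_gradPsi nu h T \<theta> = mean \<theta>"
proof -
  have ex: "\<exists>g. GDERIV Ps \<theta> :> g" using grad[OF th] by (auto simp: gderiv_def)
  define g where "g = (SOME g. GDERIV Ps \<theta> :> g)"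
  have "GDERIV Ps \<theta> :> g" unfolding g_def by (rule someI_ex[OF ex])
  then have "(\<lambda>h. h \<bullet> g) = (\<lambda>h. h \<bullet> mean \<theta>)"
    unfolding gderiv_def using grad[OF th] by (rule has_derivative_unique)
  then have "(g - mean \<theta>) \<bullet> g = (g - mean \<theta>) \<bullet> mean \<theta>" by metis
  then have "(g - mean \<theta>) \<bullet> (g - mean \<theta>) = 0" by (simp add: inner_diff_right)
  then have "g = mean \<theta>" by simp
  then show ?thesis by (simp add: expfam_gradPsi_def g_def)
qed

lemma Ps_cont: "continuous_on Th Ps"
  by (intro continuous_at_imp_continuous_on ballI has_derivative_continuous[OF grad])

end

lemma KL_density:
  fixes g :: "'a \<Rightarrow> real"
  assumes P1: "P1 = density P0 (\<lambda>x. ennreal (g x))" and g[measurable]: "g \<in> borel_measurable P0"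
    and gnn: "\<forall>x\<in>space P0. g x \<ge> 0" and sf: "sigma_finite_measure P0"
    and li: "integrable P1 (\<lambda>x. ln (g x))"
  shows "KL_div P1 P0 = ereal (\<integral>x. ln (g x) \<partial>P1)"
proof -
  have sets: "sets P1 = sets P0" by (simp add: P1)
  have ac: "absolutely_continuous P0 P1" unfolding P1 by (rule absolutely_continuousI_density) measurable
  have ae0: "AE x in P0. ennreal (g x) = RN_deriv P0 P1 x"
    by (rule sigma_finite_measure.RN_deriv_unique[OF sf _ P1[symmetric]]) measurable
  define DD where "DD x = ln (enn2real (RN_deriv P0 P1 x))" for x
  have ae1: "AE x in P1. DD x = ln (g x)"
    unfolding P1
  proof (subst AE_density)
    show "(\<lambda>x. ennreal (g x)) \<in> borel_measurable P0" by measurable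
    show "AE x in P0. 0 < ennreal (g x) \<longrightarrow> DD x = ln (g x)"
      using ae0
    proof eventually_elim
      case (elim x)
      then show ?case using gnn by (simp add: DD_def elim[symmetric])
    qed
  qed
  have ae1': "AE x in P1. x \<in> space P0 \<longrightarrow> DD x = ln (g x)" using ae1 by auto
  have i1: "integrable P1 (\<lambda>x. max 0 (ln (g x)))" using li by (intro integrable_max) auto
  have i2: "integrable P1 (\<lambda>x. max 0 (- ln (g x)))" using li by (intro integrable_max) auto
  have n1: "(\<integral>\<^sup>+x. ennreal (max 0 (DD x)) \<partial>P1) = ennreal (\<integral>x. max 0 (ln (g x)) \<partial>P1)"
  proof -
    have "(\<integral>\<^sup>+x. ennreal (max 0 (DD x)) \<partial>P1) = (\<integral>\<^sup>+x. ennreal (max 0 (ln (g x))) \<partial>P1)"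
      by (intro nn_integral_cong_AE) (use ae1 in auto)
    also have "\<dots> = ennreal (\<integral>x. max 0 (ln (g x)) \<partial>P1)"
      by (intro nn_integral_eq_integral i1) auto
    finally show ?thesis .
  qed
  have n2: "(\<integral>\<^sup>+x. ennreal (max 0 (- DD x)) \<partial>P1) = ennreal (\<integral>x. max 0 (- ln (g x)) \<partial>P1)"
  proof -
    have "(\<integral>\<^sup>+x. ennreal (max 0 (- DD x)) \<partial>P1) = (\<integral>\<^sup>+x. ennreal (max 0 (- ln (g x))) \<partial>P1)"
      by (intro nn_integral_cong_AE) (use ae1 in auto)
    also have "\<dots> = ennreal (\<integral>x. max 0 (- ln (g x)) \<partial>P1)"
      by (intro nn_integral_eq_integral i2) auto
    finally show ?thesis .
  qed
  have pos1: "(\<integral>x. max 0 (ln (g x)) \<partial>P1) \<ge> 0" by (intro integral_nonneg_AE) auto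
  have pos2: "(\<integral>x. max 0 (- ln (g x)) \<partial>P1) \<ge> 0" by (intro integral_nonneg_AE) auto
  have diff: "(\<integral>x. max 0 (ln (g x)) \<partial>P1) - (\<integral>x. max 0 (- ln (g x)) \<partial>P1) = (\<integral>x. ln (g x) \<partial>P1)"
  proof -
    have "(\<integral>x. max 0 (ln (g x)) \<partial>P1) - (\<integral>x. max 0 (- ln (g x)) \<partial>P1)
        = (\<integral>x. max 0 (ln (g x)) - max 0 (- ln (g x)) \<partial>P1)"
      using i1 i2 by (rule Bochner_Integration.integral_diff[symmetric])
    also have "\<dots> = (\<integral>x. ln (g x) \<partial>P1)"
      by (intro Bochner_Integration.integral_cong refl) linarith
    finally show ?thesis .
  qed
  show ?thesis
    unfolding KL_div_def Let_def
    using sets ac n1 n2 pos1 pos2 diff by (simp add: DD_def)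
qed

context ef begin

lemma KL_fam:
  assumes t1: "\<theta>1 \<in> Th" and t0: "\<theta>0 \<in> Th"
  shows "KL_div (D \<theta>1) (D \<theta>0) = ereal ((\<theta>1 - \<theta>0) \<bullet> mean \<theta>1 - Ps \<theta>1 + Ps \<theta>0)"
proof -
  define g where "g y = exp ((\<theta>1 - \<theta>0) \<bullet> T y - Ps \<theta>1 + Ps \<theta>0)" for y
  have gm[measurable]: "g \<in> borel_measurable nu" unfolding g_def by measurable
  have gm': "g \<in> borel_measurable (D \<theta>0)" using gm by (simp add: measurable_cong_sets[OF sets_D refl])
  have eq: "D \<theta>1 = density (D \<theta>0) (\<lambda>x. ennreal (g x))"
  proof -
    have "density (D \<theta>0) (\<lambda>x. ennreal (g x)) = density nu (\<lambda>x. ennreal (dens \<theta>0 x) * ennreal (g x))"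
      unfolding expfam_dist_def by (rule density_density_eq) measurable
    also have "\<dots> = density nu (\<lambda>x. ennreal (dens \<theta>1 x))"
    proof (rule density_cong)
      show "(\<lambda>x. ennreal (dens \<theta>0 x) * ennreal (g x)) \<in> borel_measurable nu" by measurable
      show "(\<lambda>x. ennreal (dens \<theta>1 x)) \<in> borel_measurable nu" by measurable
      show "AE x in nu. ennreal (dens \<theta>0 x) * ennreal (g x) = ennreal (dens \<theta>1 x)"
      proof (rule AE_I2)
        fix x assume x: "x \<in> space nu"
        have "dens \<theta>0 x * g x = dens \<theta>1 x"
          by (simp add: expfam_dens_def g_def mult.assoc exp_add[symmetric] inner_diff_left)
        then show "ennreal (dens \<theta>0 x) * ennreal (g x) = ennreal (dens \<theta>1 x)"
          using dens_nonneg[OF x] by (metis ennreal_mult exp_ge_zero g_def)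
      qed
    qed
    finally show ?thesis by (simp add: expfam_dist_def)
  qed
  have lg: "ln (g y) = (\<theta>1 - \<theta>0) \<bullet> T y - Ps \<theta>1 + Ps \<theta>0" for y by (simp add: g_def)
  interpret P1: prob_space "D \<theta>1" by (rule D_prob[OF t1])
  have li: "integrable (D \<theta>1) (\<lambda>y. (\<theta>1 - \<theta>0) \<bullet> T y - Ps \<theta>1 + Ps \<theta>0)"
    using inner_mean(1)[OF t1, of "\<theta>1 - \<theta>0"] by auto
  have iv: "(\<integral>y. (\<theta>1 - \<theta>0) \<bullet> T y - Ps \<theta>1 + Ps \<theta>0 \<partial>D \<theta>1) = (\<theta>1 - \<theta>0) \<bullet> mean \<theta>1 - Ps \<theta>1 + Ps \<theta>0"
  proof -
    have i0: "integrable (D \<theta>1) (\<lambda>y. (\<theta>1 - \<theta>0) \<bullet> T y)" by (rule inner_mean(1)[OF t1])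
    have "(\<integral>y. (\<theta>1 - \<theta>0) \<bullet> T y - Ps \<theta>1 + Ps \<theta>0 \<partial>D \<theta>1)
        = (\<integral>y. (\<theta>1 - \<theta>0) \<bullet> T y + (Ps \<theta>0 - Ps \<theta>1) \<partial>D \<theta>1)"
      by (intro Bochner_Integration.integral_cong refl) simp
    also have "\<dots> = (\<integral>y. (\<theta>1 - \<theta>0) \<bullet> T y \<partial>D \<theta>1) + (\<integral>y. (Ps \<theta>0 - Ps \<theta>1) \<partial>D \<theta>1)"
      using i0 by (intro Bochner_Integration.integral_add) auto
    also have "(\<integral>y. (Ps \<theta>0 - Ps \<theta>1) \<partial>D \<theta>1) = Ps \<theta>0 - Ps \<theta>1"
      using lebesgue_integral_const[of "D \<theta>1" "Ps \<theta>0 - Ps \<theta>1"] P1.prob_space by simp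
    finally show ?thesis using inner_mean(2)[OF t1] by simp
  qed
  have "KL_div (D \<theta>1) (D \<theta>0) = ereal (\<integral>y. ln (g y) \<partial>D \<theta>1)"
  proof (rule KL_density[OF eq gm'])
    show "\<forall>x\<in>space (D \<theta>0). 0 \<le> g x" by (simp add: g_def)
    show "sigma_finite_measure (D \<theta>0)" by (rule prob_space_imp_sigma_finite[OF D_prob[OF t0]])
    show "integrable (D \<theta>1) (\<lambda>x. ln (g x))" unfolding lg by (rule li)
  qed
  also have "\<dots> = ereal ((\<theta>1 - \<theta>0) \<bullet> mean \<theta>1 - Ps \<theta>1 + Ps \<theta>0)"
    unfolding lg iv ..
  finally show ?thesis .
qed

lemma Ps_convex:
  assumes t: "\<theta> \<in> Th" and t': "\<theta>' \<in> Th"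
  shows "Ps \<theta> + (\<theta>' - \<theta>) \<bullet> mean \<theta> \<le> Ps \<theta>'"
proof -
  define a where "a = \<theta>' - \<theta>"
  define c where "c = a \<bullet> mean \<theta>"
  have ta: "\<theta> + a \<in> Th" using t' by (simp add: a_def)
  interpret P: prob_space "D \<theta>" by (rule D_prob[OF t])
  have i1: "integrable (D \<theta>) (\<lambda>y. exp c * (1 + a \<bullet> T y - c))"
    using inner_mean(1)[OF t, of a] by auto
  have "exp c = (\<integral>y. exp c * (1 + a \<bullet> T y - c) \<partial>D \<theta>)"
  proof -
    have i0: "integrable (D \<theta>) (\<lambda>y. a \<bullet> T y)" by (rule inner_mean(1)[OF t])
    have "(\<integral>y. exp c * (1 + a \<bullet> T y - c) \<partial>D \<theta>) = exp c * (\<integral>y. 1 + a \<bullet> T y - c \<partial>D \<theta>)"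
      by (rule integral_mult_right_zero)
    also have "(\<integral>y. 1 + a \<bullet> T y - c \<partial>D \<theta>) = (\<integral>y. a \<bullet> T y + (1 - c) \<partial>D \<theta>)"
      by (rule Bochner_Integration.integral_cong) auto
    also have "(\<integral>y. a \<bullet> T y + (1 - c) \<partial>D \<theta>) = (\<integral>y. a \<bullet> T y \<partial>D \<theta>) + (\<integral>y. (1 - c) \<partial>D \<theta>)"
      using i0 by (intro Bochner_Integration.integral_add) auto
    also have "(\<integral>y. (1 - c) \<partial>D \<theta>) = 1 - c"
      using lebesgue_integral_const[of "D \<theta>" "1 - c"] P.prob_space by simp
    finally show ?thesis using inner_mean(2)[OF t, of a] by (simp add: c_def)
  qed
  also have "\<dots> \<le> (\<integral>y. exp (a \<bullet> T y) \<partial>D \<theta>)"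
  proof (rule integral_mono[OF i1 mgf(1)[OF t ta]])
    fix y
    have "1 + (a \<bullet> T y - c) \<le> exp (a \<bullet> T y - c)" by (rule exp_ge_add_one_self)
    then have "exp c * (1 + (a \<bullet> T y - c)) \<le> exp c * exp (a \<bullet> T y - c)" by simp
    then have "exp c * (1 + (a \<bullet> T y - c)) \<le> exp (a \<bullet> T y)" by (simp add: exp_diff)
    then show "exp c * (1 + a \<bullet> T y - c) \<le> exp (a \<bullet> T y)" by (simp add: add_diff_eq)
  qed
  also have "\<dots> = Zr \<theta>' / Zr \<theta>" using mgf(2)[OF t ta] by (simp add: a_def)
  finally have "c \<le> ln (Zr \<theta>' / Zr \<theta>)"
    using Z_pos[OF t] Z_pos[OF t'] by (subst ln_ge_iff) auto
  then show ?thesis using Z_pos[OF t] Z_pos[OF t'] by (simp add: Psi_eq ln_div c_def a_def)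
qed

lemma loss_exp:
  assumes t: "\<theta> \<in> Th"
  shows "integrable (D \<theta>) (\<lambda>y. b - T y \<bullet> l)" "(\<integral>y. b - T y \<bullet> l \<partial>D \<theta>) = b - mean \<theta> \<bullet> l"
proof -
  interpret P: prob_space "D \<theta>" by (rule D_prob[OF t])
  have i0: "integrable (D \<theta>) (\<lambda>y. T y \<bullet> l)" using T_int[OF t] by auto
  show "integrable (D \<theta>) (\<lambda>y. b - T y \<bullet> l)" using i0 by auto
  have "(\<integral>y. b - T y \<bullet> l \<partial>D \<theta>) = (\<integral>y. b \<partial>D \<theta>) - (\<integral>y. T y \<bullet> l \<partial>D \<theta>)"
    using i0 by (intro Bochner_Integration.integral_diff) auto
  also have "(\<integral>y. b \<partial>D \<theta>) = b" using lebesgue_integral_const[of "D \<theta>" b] P.prob_space by simp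
  also have "(\<integral>y. T y \<bullet> l \<partial>D \<theta>) = mean \<theta> \<bullet> l"
    unfolding mean_def using T_int[OF t] by (rule integral_inner_left)
  finally show "(\<integral>y. b - T y \<bullet> l \<partial>D \<theta>) = b - mean \<theta> \<bullet> l" .
qed

end

locale disc =
  fixes MX :: "'x measure" and C :: nat and xhat :: "nat \<Rightarrow> 'x"
  assumes C: "C > 0" and inj: "inj_on xhat {..<C}" and xs: "\<forall>c<C. xhat c \<in> space MX"
    and xm: "\<forall>c<C. {xhat c} \<in> sets MX"
begin

definition B :: "(nat \<Rightarrow> real) \<Rightarrow> 'x measure" where
  "B q = point_measure {..<C} (\<lambda>c. ennreal (q c)) \<bind> (\<lambda>c. return MX (xhat c))"

lemma retN: "\<forall>c<C. return MX (xhat c) \<in> space (subprob_algebra MX)"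
  using xs by (auto simp: space_subprob_algebra intro: prob_space_imp_subprob_space prob_space_return)

lemma B_sets: assumes "\<forall>c<C. q c \<ge> 0" shows "sets (B q) = sets MX"
  unfolding B_def by (rule bind_point_props(1)[OF C assms retN])

lemma B_emeasure:
  assumes q: "\<forall>c<C. q c \<ge> 0" and A: "A \<in> sets MX"
  shows "emeasure (B q) A = (\<Sum>c<C. ennreal (q c) * indicator A (xhat c))"
proof -
  have "emeasure (B q) A = (\<Sum>c<C. ennreal (q c) * emeasure (return MX (xhat c)) A)"
    unfolding B_def using bind_point_props(2)[OF C q retN] A by blast
  also have "\<dots> = (\<Sum>c<C. ennreal (q c) * indicator A (xhat c))"
    using A by (intro sum.cong refl) simp
  finally show ?thesis .
qed

lemma delta_sum:
  assumes c: "c < C"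
  shows "(\<Sum>d<C. f d * indicator {xhat c} (xhat d)) = (f c :: 'a::semiring_1)"
proof -
  have "(\<Sum>d<C. f d * indicator {xhat c} (xhat d)) = (\<Sum>d<C. if d = c then f d else 0)"
    using inj c by (intro sum.cong refl) (auto simp: indicator_def inj_on_def)
  also have "\<dots> = f c" using c by simp
  finally show ?thesis .
qed

lemma B_point:
  assumes q: "\<forall>c<C. q c \<ge> 0" and c: "c < C"
  shows "emeasure (B q) {xhat c} = ennreal (q c)"
  using B_emeasure[OF q xm[rule_format, OF c]] delta_sum[OF c, of "\<lambda>d. ennreal (q d)"] by simp

lemma B_prob:
  assumes q: "\<forall>c<C. q c \<ge> 0" and s: "(\<Sum>c<C. q c) = 1"
  shows "prob_space (B q)"
proof (rule prob_spaceI)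
  have sp: "space (B q) = space MX" using B_sets[OF q] by (rule sets_eq_imp_space_eq)
  have "emeasure (B q) (space MX) = (\<Sum>c<C. ennreal (q c) * indicator (space MX) (xhat c))"
    by (rule B_emeasure[OF q sets.top])
  also have "\<dots> = (\<Sum>c<C. ennreal (q c))" using xs by (intro sum.cong refl) simp
  also have "\<dots> = 1" using q s by (subst sum_ennreal) auto
  finally show "emeasure (B q) (space (B q)) = 1" using sp by simp
qed

lemma nominal_B:
  assumes p: "\<forall>c<C. p c \<ge> 0"
  shows "nominal_X MX C xhat p = B p"
  unfolding B_def by (rule nominal_X_bind[OF C p xs])

lemma Xhat_sets: "xhat ` {..<C} \<in> sets MX"
proof -
  have "xhat ` {..<C} = (\<Union>c\<in>{..<C}. {xhat c})" by auto
  also have "\<dots> \<in> sets MX" using xm by (intro sets.finite_UN) auto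
  finally show ?thesis .
qed

lemma QX_char:
  assumes p: "\<forall>c<C. p c \<ge> 0" and QX: "prob_space QX" and sQ: "sets QX = sets MX"
    and ac: "absolutely_continuous (B p) QX"
  shows "\<forall>c<C. p c = 0 \<longrightarrow> measure QX {xhat c} = 0"
    and "\<forall>A\<in>sets MX. emeasure QX A = (\<Sum>c<C. ennreal (measure QX {xhat c}) * indicator A (xhat c))"
    and "(\<Sum>c<C. measure QX {xhat c}) = 1"
proof -
  interpret Q: prob_space QX by fact
  have sB: "sets (B p) = sets MX" by (rule B_sets[OF p])
  have null: "A \<in> sets MX \<Longrightarrow> emeasure (B p) A = 0 \<Longrightarrow> emeasure QX A = 0" for A
  proof -
    assume A: "A \<in> sets MX" "emeasure (B p) A = 0"
    then have "A \<in> null_sets (B p)" using sB by auto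
    then have "A \<in> null_sets QX" using ac by (auto simp: absolutely_continuous_def)
    then show "emeasure QX A = 0" by auto
  qed
  show "\<forall>c<C. p c = 0 \<longrightarrow> measure QX {xhat c} = 0"
  proof safe
    fix c assume c: "c < C" and "p c = 0"
    then have "emeasure (B p) {xhat c} = 0" using B_point[OF p c] by simp
    then have "emeasure QX {xhat c} = 0" using null xm c by blast
    then show "measure QX {xhat c} = 0" by (simp add: Q.emeasure_eq_measure)
  qed
  have cpl: "emeasure QX (space MX - xhat ` {..<C}) = 0"
  proof (rule null)
    show "space MX - xhat ` {..<C} \<in> sets MX" using Xhat_sets by auto
    show "emeasure (B p) (space MX - xhat ` {..<C}) = 0"
      using B_emeasure[OF p, of "space MX - xhat ` {..<C}"] Xhat_sets by (auto simp: indicator_def)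
  qed
  show ch: "\<forall>A\<in>sets MX. emeasure QX A = (\<Sum>c<C. ennreal (measure QX {xhat c}) * indicator A (xhat c))"
  proof
    fix A assume A: "A \<in> sets MX"
    have AX: "A \<inter> xhat ` {..<C} \<in> sets MX" using A Xhat_sets by auto
    have "emeasure QX A = emeasure QX (A \<inter> xhat ` {..<C})"
    proof -
      have "A - xhat ` {..<C} \<subseteq> space MX - xhat ` {..<C}" using sets.sets_into_space[OF A] by auto
      then have "emeasure QX (A - xhat ` {..<C}) = 0"
        using cpl Xhat_sets A sQ by (metis emeasure_eq_0 sets.Diff sets.top)
      moreover have "emeasure QX A = emeasure QX (A \<inter> xhat ` {..<C}) + emeasure QX (A - xhat ` {..<C})"
      proof -
        have s1: "A \<inter> xhat ` {..<C} \<in> sets QX" using AX sQ by simp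
        have s2: "A - xhat ` {..<C} \<in> sets QX" using A Xhat_sets sQ by simp
        have "emeasure QX (A \<inter> xhat ` {..<C}) + emeasure QX (A - xhat ` {..<C})
            = emeasure QX ((A \<inter> xhat ` {..<C}) \<union> (A - xhat ` {..<C}))"
          by (rule plus_emeasure[OF s1 s2]) blast
        also have "(A \<inter> xhat ` {..<C}) \<union> (A - xhat ` {..<C}) = A" by blast
        finally show ?thesis by simp
      qed
      ultimately show ?thesis by simp
    qed
    also have "\<dots> = (\<Sum>x\<in>A \<inter> xhat ` {..<C}. emeasure QX {x})"
      using xm sQ by (intro emeasure_eq_sum_singleton) auto
    also have "A \<inter> xhat ` {..<C} = xhat ` {c\<in>{..<C}. xhat c \<in> A}" by auto
    also have "(\<Sum>x\<in>xhat ` {c\<in>{..<C}. xhat c \<in> A}. emeasure QX {x}) = (\<Sum>c\<in>{c\<in>{..<C}. xhat c \<in> A}. emeasure QX {xhat c})"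
      using inj by (subst sum.reindex) (auto intro: inj_on_subset)
    also have "\<dots> = (\<Sum>c<C. emeasure QX {xhat c} * indicator A (xhat c))"
    proof -
      have "(\<Sum>c\<in>{c\<in>{..<C}. xhat c \<in> A}. emeasure QX {xhat c}) = (\<Sum>c<C. if xhat c \<in> A then emeasure QX {xhat c} else 0)"
        by (rule sum.inter_filter) simp
      also have "\<dots> = (\<Sum>c<C. emeasure QX {xhat c} * indicator A (xhat c))"
        by (intro sum.cong refl) (simp add: indicator_def)
      finally show ?thesis .
    qed
    also have "\<dots> = (\<Sum>c<C. ennreal (measure QX {xhat c}) * indicator A (xhat c))"
      by (simp add: Q.emeasure_eq_measure)
    finally show "emeasure QX A = (\<Sum>c<C. ennreal (measure QX {xhat c}) * indicator A (xhat c))" .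
  qed
  have "1 = emeasure QX (space MX)" using Q.emeasure_space_1 sets_eq_imp_space_eq[OF sQ] by simp
  also have "\<dots> = (\<Sum>c<C. ennreal (measure QX {xhat c}) * indicator (space MX) (xhat c))"
    using ch by blast
  also have "\<dots> = (\<Sum>c<C. ennreal (measure QX {xhat c}))" using xs by (intro sum.cong refl) simp
  also have "\<dots> = ennreal (\<Sum>c<C. measure QX {xhat c})" by (subst sum_ennreal) auto
  finally show "(\<Sum>c<C. measure QX {xhat c}) = 1"
    by (metis ennreal_eq_1)
qed

end

lemma return_pair_emeasure:
  assumes x: "x \<in> space MX" and K: "sets K = sets N" and sf: "sigma_finite_measure K"
    and S: "S \<in> sets (MX \<Otimes>\<^sub>M N)"
  shows "emeasure (return MX x \<Otimes>\<^sub>M K) S = emeasure K (Pair x -` S)"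
proof -
  have ss: "sets (return MX x \<Otimes>\<^sub>M K) = sets (MX \<Otimes>\<^sub>M N)"
    using K by (intro sets_pair_measure_cong) auto
  have S2: "S \<in> sets (return MX x \<Otimes>\<^sub>M K)" using S ss by simp
  interpret sigma_finite_measure K by fact
  have "emeasure (return MX x \<Otimes>\<^sub>M K) S = (\<integral>\<^sup>+ x'. emeasure K (Pair x' -` S) \<partial>return MX x)"
    using S2 by (rule emeasure_pair_measure_alt)
  also have "\<dots> = emeasure K (Pair x -` S)"
    using x S2 by (intro nn_integral_return) (auto intro!: measurable_emeasure_Pair)
  finally show ?thesis .
qed

lemma return_pair_distr:
  assumes x: "x \<in> space MX" and K: "sets K = sets N" and sf: "sigma_finite_measure K"
  shows "return MX x \<Otimes>\<^sub>M K = distr K (MX \<Otimes>\<^sub>M N) (\<lambda>y. (x,y))"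
proof (rule measure_eqI)
  have ss: "sets (return MX x \<Otimes>\<^sub>M K) = sets (MX \<Otimes>\<^sub>M N)"
    using K by (intro sets_pair_measure_cong) auto
  then show "sets (return MX x \<Otimes>\<^sub>M K) = sets (distr K (MX \<Otimes>\<^sub>M N) (\<lambda>y. (x, y)))" by simp
  fix S assume "S \<in> sets (return MX x \<Otimes>\<^sub>M K)"
  then have S: "S \<in> sets (MX \<Otimes>\<^sub>M N)" using ss by auto
  have "emeasure (return MX x \<Otimes>\<^sub>M K) S = emeasure K (Pair x -` S)"
    by (rule return_pair_emeasure[OF x K sf S])
  also have "\<dots> = emeasure (distr K (MX \<Otimes>\<^sub>M N) (\<lambda>y. (x,y))) S"
  proof -
    have m: "(\<lambda>y. (x,y)) \<in> measurable K (MX \<Otimes>\<^sub>M N)"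
      using x K by (auto intro!: measurable_Pair simp: measurable_cong_sets[OF K refl])
    have "(\<lambda>y. (x,y)) -` S \<inter> space K = Pair x -` S"
      using sets.sets_into_space[OF S] K by (auto simp: space_pair_measure dest: sets_eq_imp_space_eq)
    then show ?thesis using m S by (simp add: emeasure_distr)
  qed
  finally show "emeasure (return MX x \<Otimes>\<^sub>M K) S = emeasure (distr K (MX \<Otimes>\<^sub>M N) (\<lambda>y. (x, y))) S" .
qed

lemma return_integrable:
  fixes f :: "'a \<Rightarrow> real"
  assumes x: "x \<in> space M" and f: "f \<in> borel_measurable M"
  shows "integrable (return M x) f"
proof (rule integrableI_bounded)
  show "f \<in> borel_measurable (return M x)" using f by simp
  have "(\<integral>\<^sup>+ y. ennreal (norm (f y)) \<partial>return M x) = ennreal (norm (f x))"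
    using x f by (intro nn_integral_return) auto
  then show "(\<integral>\<^sup>+ y. ennreal (norm (f y)) \<partial>return M x) < \<infinity>" by simp
qed

context disc begin

lemma disc_KL:
  assumes p: "\<forall>c<C. p c \<ge> 0" and ps: "(\<Sum>c<C. p c) = 1"
    and q: "\<forall>c<C. q c \<ge> 0" and pq: "\<forall>c<C. p c = 0 \<longrightarrow> q c = 0"
  shows "KL_div (B q) (B p) = ereal (\<Sum>c<C. q c * ln (q c / p c))"
proof -
  define g where "g x = (\<Sum>c<C. (q c / p c) * indicator {xhat c} x)" for x
  have gm: "g \<in> borel_measurable MX"
    unfolding g_def using xm
    by (intro borel_measurable_sum borel_measurable_times borel_measurable_const borel_measurable_indicator) auto
  have gB: "g \<in> borel_measurable (B p)" using gm by (simp add: measurable_cong_sets[OF B_sets[OF p] refl])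
  have gx: "g (xhat d) = q d / p d" if d: "d < C" for d
  proof -
    have "g (xhat d) = (\<Sum>c<C. if c = d then q c / p c else 0)"
      unfolding g_def using inj d by (intro sum.cong refl) (auto simp: indicator_def inj_on_def)
    also have "\<dots> = q d / p d" using d by simp
    finally show ?thesis .
  qed
  have gnn: "g x \<ge> 0" for x unfolding g_def using p q by (intro sum_nonneg) auto
  have eq: "B q = density (B p) (\<lambda>x. ennreal (g x))"
  proof (rule measure_eqI)
    show "sets (B q) = sets (density (B p) (\<lambda>x. ennreal (g x)))" using B_sets[OF p] B_sets[OF q] by simp
    fix A assume "A \<in> sets (B q)"
    then have A: "A \<in> sets MX" using B_sets[OF q] by simp
    have fm: "(\<lambda>x. ennreal (g x) * indicator A x) \<in> borel_measurable MX" using gm A by measurable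
    have "emeasure (density (B p) (\<lambda>x. ennreal (g x))) A = (\<integral>\<^sup>+x. ennreal (g x) * indicator A x \<partial>B p)"
      using gB A B_sets[OF p] by (intro emeasure_density) auto
    also have "\<dots> = (\<Sum>d<C. ennreal (p d) * (\<integral>\<^sup>+x. ennreal (g x) * indicator A x \<partial>return MX (xhat d)))"
      by (rule mix_nn[OF C p retN B_sets[OF p] _ fm])
         (use bind_point_props(2)[OF C p retN] in \<open>simp add: B_def\<close>)
    also have "\<dots> = (\<Sum>d<C. ennreal (q d) * indicator A (xhat d))"
    proof (intro sum.cong refl)
      fix d assume "d \<in> {..<C}"
      then have d: "d < C" by simp
      have "(\<integral>\<^sup>+x. ennreal (g x) * indicator A x \<partial>return MX (xhat d)) = ennreal (g (xhat d)) * indicator A (xhat d)"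
        using xs d fm by (intro nn_integral_return) auto
      moreover have "ennreal (p d) * ennreal (g (xhat d)) = ennreal (q d)"
      proof (cases "p d = 0")
        case True then show ?thesis using pq d by simp
      next
        case False
        then have "ennreal (p d) * ennreal (g (xhat d)) = ennreal (p d * (q d / p d))"
          using p q d gx[OF d] by (subst ennreal_mult) auto
        also have "p d * (q d / p d) = q d" using False by simp
        finally show ?thesis .
      qed
      ultimately show "ennreal (p d) * (\<integral>\<^sup>+x. ennreal (g x) * indicator A x \<partial>return MX (xhat d)) = ennreal (q d) * indicator A (xhat d)"
        by (simp add: mult.assoc[symmetric])
    qed
    also have "\<dots> = emeasure (B q) A" using B_emeasure[OF q A] by simp
    finally show "emeasure (B q) A = emeasure (density (B p) (\<lambda>x. ennreal (g x))) A" by simp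
  qed
  have lm: "(\<lambda>x. ln (g x)) \<in> borel_measurable MX" using gm by measurable
  have mi: "integrable (B q) (\<lambda>x. ln (g x)) \<and> (\<integral>x. ln (g x) \<partial>B q) = (\<Sum>c<C. q c * (\<integral>x. ln (g x) \<partial>return MX (xhat c)))"
    by (rule mix_integral[OF C q retN B_sets[OF q] _ lm])
       (use bind_point_props(2)[OF C q retN] xs lm in \<open>auto simp: B_def intro!: return_integrable\<close>)
  have "KL_div (B q) (B p) = ereal (\<integral>x. ln (g x) \<partial>B q)"
  proof (rule KL_density[OF eq gB])
    show "\<forall>x\<in>space (B p). 0 \<le> g x" using gnn by simp
    show "sigma_finite_measure (B p)" by (rule prob_space_imp_sigma_finite[OF B_prob[OF p ps]])
    show "integrable (B q) (\<lambda>x. ln (g x))" using mi by simp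
  qed
  also have "(\<integral>x. ln (g x) \<partial>B q) = (\<Sum>c<C. q c * ln (q c / p c))"
    using mi xs lm gx by (auto intro!: sum.cong simp: integral_return)
  finally show ?thesis .
qed

lemma Q_decomp:
  assumes Q: "prob_space Q" and sQ: "sets Q = sets (MX \<Otimes>\<^sub>M nu)"
    and K: "\<forall>c<C. prob_space (K c) \<and> sets (K c) = sets nu"
    and q: "\<forall>c<C. q c \<ge> 0" and qs: "(\<Sum>c<C. q c) = 1"
    and rect: "\<forall>c<C. \<forall>A\<in>sets nu. emeasure Q ({xhat c} \<times> A) = ennreal (q c) * emeasure (K c) A"
  shows "\<forall>S\<in>sets (MX \<Otimes>\<^sub>M nu). emeasure Q S = (\<Sum>c<C. ennreal (q c) * emeasure (return MX (xhat c) \<Otimes>\<^sub>M K c) S)"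
proof
  interpret Q: prob_space Q by fact
  fix S assume S: "S \<in> sets (MX \<Otimes>\<^sub>M nu)"
  define R where "R c = {xhat c} \<times> space nu" for c
  have Rs: "R c \<in> sets Q" if "c < C" for c using xm that sQ by (simp add: R_def)
  have disj: "disjoint_family_on R {..<C}"
    using inj by (auto simp: disjoint_family_on_def R_def inj_on_def)
  have disjS: "disjoint_family_on (\<lambda>c. S \<inter> R c) {..<C}"
    using disj by (auto simp: disjoint_family_on_def)
  have QR: "emeasure Q (R c) = ennreal (q c)" if c: "c < C" for c
  proof -
    have "emeasure Q (R c) = ennreal (q c) * emeasure (K c) (space nu)"
      using rect c by (simp add: R_def)
    also have "emeasure (K c) (space nu) = 1"
      using K c prob_space.emeasure_space_1[of "K c"] sets_eq_imp_space_eq[of "K c" nu] by auto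
    finally show ?thesis by simp
  qed
  define U where "U = (\<Union>c\<in>{..<C}. R c)"
  have Us: "U \<in> sets Q" unfolding U_def using Rs by (intro sets.finite_UN) auto
  have QU: "emeasure Q U = 1"
  proof -
    have "emeasure Q U = (\<Sum>c<C. emeasure Q (R c))"
      unfolding U_def using Rs disj by (intro sum_emeasure[symmetric]) auto
    also have "\<dots> = (\<Sum>c<C. ennreal (q c))" using QR by simp
    also have "\<dots> = 1" using q qs by (subst sum_ennreal) auto
    finally show ?thesis .
  qed
  have Qc: "emeasure Q (space Q - U) = 0"
    using Us QU Q.emeasure_space_1 by (simp add: emeasure_compl)
  have Ss: "S \<in> sets Q" using S sQ by simp
  have "emeasure Q S = emeasure Q (S \<inter> U)"
  proof -
    have s1: "S \<inter> U \<in> sets Q" using Ss Us by simp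
    have s2: "S - U \<in> sets Q" using Ss Us by simp
    have z: "emeasure Q (S - U) = 0"
    proof -
      have "S - U \<subseteq> space Q - U" using sets.sets_into_space[OF Ss] by auto
      then show ?thesis using Qc s2 Us by (metis emeasure_eq_0 sets.Diff sets.top)
    qed
    have "emeasure Q (S \<inter> U) + emeasure Q (S - U) = emeasure Q ((S \<inter> U) \<union> (S - U))"
      by (rule plus_emeasure[OF s1 s2]) blast
    also have "(S \<inter> U) \<union> (S - U) = S" by blast
    finally show ?thesis using z by simp
  qed
  also have "S \<inter> U = (\<Union>c\<in>{..<C}. S \<inter> R c)" by (auto simp: U_def)
  also have "emeasure Q \<dots> = (\<Sum>c<C. emeasure Q (S \<inter> R c))"
    using Rs Ss disjS by (intro sum_emeasure[symmetric]) auto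
  also have "\<dots> = (\<Sum>c<C. ennreal (q c) * emeasure (return MX (xhat c) \<Otimes>\<^sub>M K c) S)"
  proof (intro sum.cong refl)
    fix c assume "c \<in> {..<C}"
    then have c: "c < C" by simp
    have "S \<inter> R c = {xhat c} \<times> (Pair (xhat c) -` S)"
      using sets.sets_into_space[OF S] by (auto simp: R_def space_pair_measure)
    moreover have "Pair (xhat c) -` S \<in> sets nu" using S by (rule sets_Pair1)
    ultimately have "emeasure Q (S \<inter> R c) = ennreal (q c) * emeasure (K c) (Pair (xhat c) -` S)"
      using rect c by simp
    also have "emeasure (K c) (Pair (xhat c) -` S) = emeasure (return MX (xhat c) \<Otimes>\<^sub>M K c) S"
      using K c xs S by (intro return_pair_emeasure[symmetric] prob_space_imp_sigma_finite) auto
    finally show "emeasure Q (S \<inter> R c) = ennreal (q c) * emeasure (return MX (xhat c) \<Otimes>\<^sub>M K c) S" .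
  qed
  finally show "emeasure Q S = (\<Sum>c<C. ennreal (q c) * emeasure (return MX (xhat c) \<Otimes>\<^sub>M K c) S)" .
qed

end

lemma gibbs_term:
  fixes p q a :: real
  assumes p: "p \<ge> 0" and q: "q \<ge> 0" and pq: "p = 0 \<longrightarrow> q = 0"
  shows "q * (a - ln (q / p)) \<le> p * exp a - q"
proof (cases "q = 0")
  case True then show ?thesis using p by simp
next
  case False
  then have qp: "q > 0" using q by simp
  then have pp: "p > 0" using p pq by (cases "p = 0") auto
  have "a - ln (q / p) = ln (p * exp a / q)"
    using qp pp by (simp add: ln_div ln_mult)
  also have "\<dots> \<le> p * exp a / q - 1" using qp pp by (intro ln_le_minus_one) simp
  finally have "q * (a - ln (q / p)) \<le> q * (p * exp a / q - 1)" using qp by (intro mult_left_mono) auto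
  also have "\<dots> = p * exp a - q" using qp by (simp add: field_simps)
  finally show ?thesis .
qed

context ef begin

lemma per_c:
  assumes t: "\<theta> \<in> Th" and th: "\<theta>h \<in> Th" and g: "\<gamma> > 0"
    and tsd: "\<theta>s = \<theta>h - inverse \<gamma> *\<^sub>R l" and tsT: "\<theta>s \<in> Th"
    and gam: "Ps \<theta>s + inverse \<gamma> * (mean \<theta>s \<bullet> l) = Ps \<theta>h - \<rho>"
    and KL: "KL_div (D \<theta>) (D \<theta>h) \<le> ereal \<rho>"
  shows "mean \<theta>s \<bullet> l \<le> mean \<theta> \<bullet> l"
proof -
  have k: "(\<theta> - \<theta>h) \<bullet> mean \<theta> - Ps \<theta> + Ps \<theta>h \<le> \<rho>" using KL KL_fam[OF t th] by simp
  have cv: "Ps \<theta> + (\<theta>s - \<theta>) \<bullet> mean \<theta> \<le> Ps \<theta>s" by (rule Ps_convex[OF t tsT])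
  have v: "\<theta> - \<theta>h = (\<theta> - \<theta>s) - inverse \<gamma> *\<^sub>R l" by (simp add: tsd)
  have e1: "(\<theta> - \<theta>h) \<bullet> mean \<theta> = (\<theta> - \<theta>s) \<bullet> mean \<theta> - inverse \<gamma> * (mean \<theta> \<bullet> l)"
    unfolding v by (simp add: inner_diff_left inner_commute[of l])
  have e2: "(\<theta>s - \<theta>) \<bullet> mean \<theta> = - ((\<theta> - \<theta>s) \<bullet> mean \<theta>)"
    by (simp add: inner_diff_left)
  have "inverse \<gamma> * (mean \<theta>s \<bullet> l) \<le> inverse \<gamma> * (mean \<theta> \<bullet> l)"
    using k cv gam e1 e2 by linarith
  then show ?thesis using g by (simp add: mult_le_cancel_left)
qed

lemma KL_star:
  assumes th: "\<theta>h \<in> Th" and tsd: "\<theta>s = \<theta>h - inverse \<gamma> *\<^sub>R l" and tsT: "\<theta>s \<in> Th"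
    and gam: "Ps \<theta>s + inverse \<gamma> * (mean \<theta>s \<bullet> l) = Ps \<theta>h - \<rho>"
  shows "KL_div (D \<theta>s) (D \<theta>h) = ereal \<rho>"
proof -
  have "(\<theta>s - \<theta>h) \<bullet> mean \<theta>s = - (inverse \<gamma> * (mean \<theta>s \<bullet> l))"
    by (simp add: tsd inner_commute)
  then show ?thesis using KL_fam[OF tsT th] gam by simp
qed

end

lemma mix_loss:
  assumes E: "ef nu h T" and Dc: "disc MX C xhat"
   and q: "\<forall>c<C. q c \<ge> 0"
   and th: "\<forall>c<C. \<theta> c \<in> expfam_Theta nu h T"
   and Fm: "F \<in> borel_measurable (MX \<Otimes>\<^sub>M nu)"
   and Fc: "\<forall>c<C. \<forall>y. F (xhat c, y) = b c - T y \<bullet> l c"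
   and Ms: "sets M = sets (MX \<Otimes>\<^sub>M nu)"
   and Me: "\<forall>S\<in>sets (MX \<Otimes>\<^sub>M nu). emeasure M S = (\<Sum>c<C. ennreal (q c) * emeasure (return MX (xhat c) \<Otimes>\<^sub>M expfam_dist nu h T (\<theta> c)) S)"
  shows "integrable M F \<and> (\<integral>z. F z \<partial>M) = (\<Sum>c<C. q c * (b c - ef.mean nu h T (\<theta> c) \<bullet> l c))"
proof -
  interpret ef nu h T by fact
  interpret disc MX C xhat by fact
  have K: "\<forall>c<C. prob_space (D (\<theta> c)) \<and> sets (D (\<theta> c)) = sets nu"
    using th D_prob sets_D by blast
  have N: "\<forall>c<C. return MX (xhat c) \<Otimes>\<^sub>M D (\<theta> c) \<in> space (subprob_algebra (MX \<Otimes>\<^sub>M nu))"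
    by (rule mixture_bind(2)[OF C q xs K])
  have per: "integrable (return MX (xhat c) \<Otimes>\<^sub>M D (\<theta> c)) F \<and>
      (\<integral>z. F z \<partial>(return MX (xhat c) \<Otimes>\<^sub>M D (\<theta> c))) = b c - mean (\<theta> c) \<bullet> l c" if c: "c < C" for c
  proof -
    have eq: "return MX (xhat c) \<Otimes>\<^sub>M D (\<theta> c) = distr (D (\<theta> c)) (MX \<Otimes>\<^sub>M nu) (\<lambda>y. (xhat c, y))"
      using xs c sets_D by (intro return_pair_distr prob_space_imp_sigma_finite D_prob) (auto simp: th)
    have pm: "(\<lambda>y. (xhat c, y)) \<in> measurable (D (\<theta> c)) (MX \<Otimes>\<^sub>M nu)"
      using xs c by (auto intro!: measurable_Pair simp: measurable_cong_sets[OF sets_D refl])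
    have fe: "(\<lambda>y. F (xhat c, y)) = (\<lambda>y. b c - T y \<bullet> l c)" using Fc c by auto
    show ?thesis
      unfolding eq integrable_distr_eq[OF pm Fm] integral_distr[OF pm Fm] fe
      using loss_exp[of "\<theta> c" "b c" "l c"] th c by auto
  qed
  have "integrable M F \<and> (\<integral>z. F z \<partial>M) = (\<Sum>c<C. q c * (\<integral>z. F z \<partial>(return MX (xhat c) \<Otimes>\<^sub>M D (\<theta> c))))"
    by (rule mix_integral[OF C q N Ms Me Fm]) (use per in blast)
  then show ?thesis using per by simp
qed


theorem theorem4p5:
  fixes nu :: "'y::euclidean_space measure" and Ycal :: "'y set"
    and h :: "'y \<Rightarrow> real" and T :: "'y \<Rightarrow> 'p::euclidean_space"
    and Xcal :: "'x::euclidean_space set" and Wcal :: "'w::euclidean_space set"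
    and lam :: "'w \<Rightarrow> 'x \<Rightarrow> 'p"
    and C :: nat and xhat :: "nat \<Rightarrow> 'x" and phat :: "nat \<Rightarrow> real" and thetahat :: "nat \<Rightarrow> 'p"
    and rho :: "nat \<Rightarrow> real" and eps :: real and w :: 'w
    and gam :: "nat \<Rightarrow> real" and alpha beta :: real
    and thetas :: "nat \<Rightarrow> 'p" and ts :: "nat \<Rightarrow> real"
    and Psi :: "'p \<Rightarrow> real" and gradPsi :: "'p \<Rightarrow> 'p" and MX :: "'x measure"
  assumes nu_sets: "sets nu = sets (restrict_space borel Ycal)"
    and h_meas: "h \<in> borel_measurable nu" and h_nonneg: "\<forall>y\<in>space nu. h y \<ge> 0"
    and T_meas: "T \<in> borel_measurable nu"
    and regular: "regular_expfam nu h T"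
    and Psi_def: "Psi \<equiv> expfam_Psi nu h T"
    and gradPsi_def: "gradPsi \<equiv> expfam_gradPsi nu h T"
    and MX_def: "MX \<equiv> restrict_space borel Xcal"
    and lam_cont: "continuous_on (Wcal \<times> Xcal) (\<lambda>(w, x). lam w x)"
    and lam_Theta: "\<forall>w'\<in>Wcal. \<forall>x\<in>Xcal. lam w' x \<in> expfam_Theta nu h T"
    and xhat_distinct: "inj_on xhat {..<C}"
    and xhat_in: "\<forall>c<C. xhat c \<in> Xcal"
    and phat_nonneg: "\<forall>c<C. phat c \<ge> 0" and phat_sum: "(\<Sum>c<C. phat c) = 1"
    and thetahat_in: "\<forall>c<C. thetahat c \<in> expfam_Theta nu h T"
    and rho_nonneg: "\<forall>c<C. rho c \<ge> 0" and eps_nonneg: "eps \<ge> 0"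
    and budget: "(\<Sum>c<C. phat c * rho c) \<le> eps"
    and w_in: "w \<in> Wcal"
    and gam_pos: "\<forall>c<C. gam c > 0"
    and thetas_def: "thetas \<equiv> (\<lambda>c. thetahat c - inverse (gam c) *\<^sub>R lam w (xhat c))"
    and thetas_in: "\<forall>c<C. thetas c \<in> expfam_Theta nu h T"
    and gam_eq: "\<forall>c<C. Psi (thetas c) + inverse (gam c) * (gradPsi (thetas c) \<bullet> lam w (xhat c))
                        = Psi (thetahat c) - rho c"
    and ts_def: "ts \<equiv> (\<lambda>c. Psi (lam w (xhat c)) - gradPsi (thetas c) \<bullet> lam w (xhat c))"
    and beta_pos: "beta > 0"
    and eq1: "(\<Sum>c<C. phat c * exp (inverse beta * (ts c - alpha) - rho c - 1)) - 1 = 0"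
    and eq2: "(\<Sum>c<C. phat c * (ts c - alpha) * exp (inverse beta * (ts c - alpha) - rho c - 1))
                - (eps + 1) * beta = 0"
  shows "mixture_dist MX nu C xhat
            (\<lambda>c. phat c * exp (inverse beta * (ts c - alpha) - rho c - 1))
            (\<lambda>c. expfam_dist nu h T (thetas c))
           \<in> ambiguity_set nu h T MX C xhat phat thetahat rho eps
       \<and> integrable (mixture_dist MX nu C xhat
            (\<lambda>c. phat c * exp (inverse beta * (ts c - alpha) - rho c - 1))
            (\<lambda>c. expfam_dist nu h T (thetas c))) (\<lambda>(x, y). ell_loss nu h T lam x y w)
       \<and> (\<forall>Q\<in>ambiguity_set nu h T MX C xhat phat thetahat rho eps.
            (\<integral>z. (\<lambda>(x, y). ell_loss nu h T lam x y w) z \<partial>Q)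
            \<le> (\<integral>z. (\<lambda>(x, y). ell_loss nu h T lam x y w) z
                   \<partial>(mixture_dist MX nu C xhat
                       (\<lambda>c. phat c * exp (inverse beta * (ts c - alpha) - rho c - 1))
                       (\<lambda>c. expfam_dist nu h T (thetas c)))))"
proof -
  interpret E: ef nu h T
    by unfold_locales (fact h_meas h_nonneg T_meas regular)+
  have C: "C > 0" using phat_sum by (cases C) auto
  have spMX: "space MX = Xcal" unfolding MX_def by (simp add: space_restrict_space)
  have xs: "\<forall>c<C. xhat c \<in> space MX" using xhat_in spMX by simp
  have xm: "\<forall>c<C. {xhat c} \<in> sets MX"
  proof safe
    fix c assume c: "c < C"
    have "{xhat c} = Xcal \<inter> {xhat c}" using xhat_in c by auto
    moreover have "{xhat c} \<in> sets borel" by simp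
    ultimately show "{xhat c} \<in> sets MX" unfolding MX_def sets_restrict_space by blast
  qed
  interpret X: disc MX C xhat
    by unfold_locales (use C xhat_distinct xs xm in auto)
  define lc where "lc c = lam w (xhat c)" for c
  define a where "a c = inverse beta * (ts c - alpha) - rho c - 1" for c
  define q where "q c = phat c * exp (a c)" for c
  define K where "K c = expfam_dist nu h T (thetas c)" for c
  have qeq: "(\<lambda>c. phat c * exp (inverse beta * (ts c - alpha) - rho c - 1)) = q"
    by (simp add: q_def a_def fun_eq_iff)
  have Keq: "(\<lambda>c. expfam_dist nu h T (thetas c)) = K" by (simp add: K_def fun_eq_iff)
  have lcT: "\<forall>c<C. lc c \<in> E.Th" using lam_Theta w_in xhat_in by (simp add: lc_def)
  have grad: "\<forall>c<C. gradPsi (thetas c) = E.mean (thetas c)"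
    using thetas_in E.gradPsi_eq by (simp add: gradPsi_def)
  have tsd: "\<forall>c<C. ts c = E.Ps (lc c) - E.mean (thetas c) \<bullet> lc c"
    using grad by (simp add: ts_def Psi_def lc_def)
  have gam': "\<forall>c<C. E.Ps (thetas c) + inverse (gam c) * (E.mean (thetas c) \<bullet> lc c) = E.Ps (thetahat c) - rho c"
    using gam_eq grad by (simp add: Psi_def lc_def)
  have thd: "\<forall>c. thetas c = thetahat c - inverse (gam c) *\<^sub>R lc c" by (simp add: thetas_def lc_def)
  have q_nn: "\<forall>c<C. q c \<ge> 0" using phat_nonneg by (simp add: q_def)
  have q_sum: "(\<Sum>c<C. q c) = 1" using eq1 by (simp add: q_def a_def)
  have q_ts: "(\<Sum>c<C. q c * (ts c - alpha)) = (eps + 1) * beta"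
  proof -
    have "(\<Sum>c<C. q c * (ts c - alpha)) = (\<Sum>c<C. phat c * (ts c - alpha) * exp (inverse beta * (ts c - alpha) - rho c - 1))"
      by (intro sum.cong refl) (simp add: q_def a_def)
    then show ?thesis using eq2 by simp
  qed
  have pq: "\<forall>c<C. phat c = 0 \<longrightarrow> q c = 0" by (simp add: q_def)
  have K: "\<forall>c<C. prob_space (K c) \<and> sets (K c) = sets nu"
    using thetas_in E.D_prob E.sets_D by (simp add: K_def)
  define Qs where "Qs = mixture_dist MX nu C xhat q K"
  have N: "\<forall>c<C. return MX (xhat c) \<Otimes>\<^sub>M K c \<in> space (subprob_algebra (MX \<Otimes>\<^sub>M nu))"
    by (rule mixture_bind(2)[OF C q_nn xs K])
  have Qs_bind: "Qs = point_measure {..<C} (\<lambda>c. ennreal (q c)) \<bind> (\<lambda>c. return MX (xhat c) \<Otimes>\<^sub>M K c)"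
    unfolding Qs_def by (rule mixture_bind(1)[OF C q_nn xs K])
  have Qs_sets: "sets Qs = sets (MX \<Otimes>\<^sub>M nu)"
    unfolding Qs_bind by (rule bind_point_props(1)[OF C q_nn N])
  have Qs_em: "\<forall>S\<in>sets (MX \<Otimes>\<^sub>M nu). emeasure Qs S = (\<Sum>c<C. ennreal (q c) * emeasure (return MX (xhat c) \<Otimes>\<^sub>M K c) S)"
    unfolding Qs_bind by (rule bind_point_props(2)[OF C q_nn N])
  have Qs_prob: "prob_space Qs"
  proof (rule prob_spaceI)
    have sp: "space Qs = space (MX \<Otimes>\<^sub>M nu)" using Qs_sets by (rule sets_eq_imp_space_eq)
    have "emeasure Qs (space (MX \<Otimes>\<^sub>M nu)) = (\<Sum>c<C. ennreal (q c) * emeasure (return MX (xhat c) \<Otimes>\<^sub>M K c) (space (MX \<Otimes>\<^sub>M nu)))"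
      using Qs_em by blast
    also have "\<dots> = (\<Sum>c<C. ennreal (q c))"
    proof (intro sum.cong refl)
      fix c assume "c \<in> {..<C}"
      then have c: "c < C" by simp
      have P: "prob_space (return MX (xhat c) \<Otimes>\<^sub>M K c)"
        using K xs c by (intro prob_space_pair prob_space_return) auto
      have "sets (return MX (xhat c) \<Otimes>\<^sub>M K c) = sets (MX \<Otimes>\<^sub>M nu)"
        using K c by (intro sets_pair_measure_cong) auto
      then have "space (return MX (xhat c) \<Otimes>\<^sub>M K c) = space (MX \<Otimes>\<^sub>M nu)" by (rule sets_eq_imp_space_eq)
      then have "emeasure (return MX (xhat c) \<Otimes>\<^sub>M K c) (space (MX \<Otimes>\<^sub>M nu)) = 1"
        using prob_space.emeasure_space_1[OF P] by simp
      then show "ennreal (q c) * emeasure (return MX (xhat c) \<Otimes>\<^sub>M K c) (space (MX \<Otimes>\<^sub>M nu)) = ennreal (q c)" by simp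
    qed
    also have "\<dots> = 1" using q_nn q_sum by (subst sum_ennreal) auto
    finally show "emeasure Qs (space Qs) = 1" using sp by simp
  qed
  define F where "F = (\<lambda>(x, y). ell_loss nu h T lam x y w)"
  have lcont: "continuous_on Xcal (lam w)"
  proof -
    have "continuous_on Xcal (\<lambda>x. (\<lambda>(w, x). lam w x) (w, x))"
      by (rule continuous_on_compose2[OF lam_cont]) (use w_in in \<open>auto intro!: continuous_intros\<close>)
    then show ?thesis by simp
  qed
  have pcont: "continuous_on Xcal (\<lambda>x. E.Ps (lam w x))"
    by (rule continuous_on_compose2[OF E.Ps_cont lcont]) (use lam_Theta w_in in auto)
  have g1[measurable]: "(\<lambda>x. E.Ps (lam w x)) \<in> borel_measurable MX"
    unfolding MX_def by (rule borel_measurable_continuous_on_restrict[OF pcont])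
  have g2[measurable]: "lam w \<in> borel_measurable MX"
    unfolding MX_def by (rule borel_measurable_continuous_on_restrict[OF lcont])
  have Fm: "F \<in> borel_measurable (MX \<Otimes>\<^sub>M nu)"
    unfolding F_def ell_loss_def by measurable
  have Fc: "\<forall>c<C. \<forall>y. F (xhat c, y) = E.Ps (lc c) - T y \<bullet> lc c"
    by (simp add: F_def ell_loss_def lc_def)
  have Qs_int: "integrable Qs F \<and> (\<integral>z. F z \<partial>Qs) = (\<Sum>c<C. q c * (E.Ps (lc c) - E.mean (thetas c) \<bullet> lc c))"
    by (rule mix_loss[OF E.ef_axioms X.disc_axioms q_nn thetas_in Fm Fc Qs_sets])
       (use Qs_em in \<open>simp add: K_def\<close>)
  have Qs_val: "(\<integral>z. F z \<partial>Qs) = (\<Sum>c<C. q c * ts c)"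
    using Qs_int tsd by simp
  have sum_qa: "(\<Sum>c<C. r c * a c) = inverse beta * (\<Sum>c<C. r c * (ts c - alpha)) - (\<Sum>c<C. rho c * r c) - (\<Sum>c<C. r c)" for r
  proof -
    have "(\<Sum>c<C. r c * a c) = (\<Sum>c<C. inverse beta * (r c * (ts c - alpha)) - rho c * r c - r c)"
      by (intro sum.cong refl) (simp add: a_def algebra_simps)
    also have "\<dots> = inverse beta * (\<Sum>c<C. r c * (ts c - alpha)) - (\<Sum>c<C. rho c * r c) - (\<Sum>c<C. r c)"
      by (simp add: sum_subtractf sum_distrib_left)
    finally show ?thesis .
  qed
  have sum_ts: "(\<Sum>c<C. r c * (ts c - alpha)) = (\<Sum>c<C. r c * ts c) - alpha" if "(\<Sum>c<C. r c) = 1" for r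
  proof -
    have "(\<Sum>c<C. r c * (ts c - alpha)) = (\<Sum>c<C. r c * ts c) - alpha * (\<Sum>c<C. r c)"
      by (simp add: right_diff_distrib sum_subtractf sum_distrib_left mult.commute)
    then show ?thesis using that by simp
  qed
  have Bpoint_measure: "measure (X.B q) {xhat c} = q c" if "c < C" for c
    using X.B_point[OF q_nn that] q_nn that by (simp add: measure_def)
  have nom: "nominal_X MX C xhat phat = X.B phat" by (rule X.nominal_B[OF phat_nonneg])
  have mem: "Qs \<in> ambiguity_set nu h T MX C xhat phat thetahat rho eps"
    unfolding ambiguity_set_def
  proof (intro CollectI conjI Qs_prob Qs_sets exI[of _ "X.B q"] exI[of _ thetas])
    show "prob_space (X.B q)" by (rule X.B_prob[OF q_nn q_sum])
    show "sets (X.B q) = sets MX" by (rule X.B_sets[OF q_nn])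
    show "\<forall>c<C. thetas c \<in> expfam_Theta nu h T" by (rule thetas_in)
    show "\<forall>c<C. \<forall>A\<in>sets nu. emeasure Qs ({xhat c} \<times> A) = emeasure (X.B q) {xhat c} * emeasure (expfam_dist nu h T (thetas c)) A"
    proof safe
      fix c A assume c: "c < C" and A: "A \<in> sets nu"
      have S: "{xhat c} \<times> A \<in> sets (MX \<Otimes>\<^sub>M nu)" using xm c A by auto
      have "emeasure Qs ({xhat c} \<times> A) = (\<Sum>d<C. ennreal (q d) * emeasure (return MX (xhat d) \<Otimes>\<^sub>M K d) ({xhat c} \<times> A))"
        using Qs_em S by blast
      also have "\<dots> = (\<Sum>d<C. (ennreal (q d) * emeasure (K d) A) * indicator {xhat c} (xhat d))"
      proof (intro sum.cong refl)
        fix d assume "d \<in> {..<C}"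
        then have d: "d < C" by simp
        have "emeasure (return MX (xhat d) \<Otimes>\<^sub>M K d) ({xhat c} \<times> A) = emeasure (K d) (Pair (xhat d) -` ({xhat c} \<times> A))"
          using K xs d S by (intro return_pair_emeasure prob_space_imp_sigma_finite) auto
        also have "\<dots> = emeasure (K d) A * indicator {xhat c} (xhat d)"
          by (cases "xhat d = xhat c") auto
        finally show "ennreal (q d) * emeasure (return MX (xhat d) \<Otimes>\<^sub>M K d) ({xhat c} \<times> A) = (ennreal (q d) * emeasure (K d) A) * indicator {xhat c} (xhat d)"
          by (simp add: mult.assoc)
      qed
      also have "\<dots> = ennreal (q c) * emeasure (K c) A"
        by (rule X.delta_sum[OF c])
      also have "\<dots> = emeasure (X.B q) {xhat c} * emeasure (expfam_dist nu h T (thetas c)) A"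
        using X.B_point[OF q_nn c] by (simp add: K_def)
      finally show "emeasure Qs ({xhat c} \<times> A) = emeasure (X.B q) {xhat c} * emeasure (expfam_dist nu h T (thetas c)) A" .
    qed
    show "\<forall>c<C. KL_div (expfam_dist nu h T (thetas c)) (expfam_dist nu h T (thetahat c)) \<le> ereal (rho c)"
    proof safe
      fix c assume c: "c < C"
      have "KL_div (expfam_dist nu h T (thetas c)) (expfam_dist nu h T (thetahat c)) = ereal (rho c)"
        using thetahat_in thd thetas_in gam' c by (intro E.KL_star) auto
      then show "KL_div (expfam_dist nu h T (thetas c)) (expfam_dist nu h T (thetahat c)) \<le> ereal (rho c)" by simp
    qed
    show "KL_div (X.B q) (nominal_X MX C xhat phat) + ereal (\<Sum>c<C. rho c * measure (X.B q) {xhat c}) \<le> ereal eps"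
    proof -
      have kl: "KL_div (X.B q) (nominal_X MX C xhat phat) = ereal (\<Sum>c<C. q c * ln (q c / phat c))"
        unfolding nom by (rule X.disc_KL[OF phat_nonneg phat_sum q_nn pq])
      have "(\<Sum>c<C. q c * ln (q c / phat c)) = (\<Sum>c<C. q c * a c)"
      proof (intro sum.cong refl)
        fix c assume "c \<in> {..<C}"
        then have c: "c < C" by simp
        show "q c * ln (q c / phat c) = q c * a c"
        proof (cases "phat c = 0")
          case True then show ?thesis by (simp add: q_def)
        next
          case False then show ?thesis by (simp add: q_def)
        qed
      qed
      also have "\<dots> = eps - (\<Sum>c<C. rho c * q c)"
        unfolding sum_qa q_ts q_sum using beta_pos by (simp add: field_simps)
      finally have "(\<Sum>c<C. q c * ln (q c / phat c)) + (\<Sum>c<C. rho c * measure (X.B q) {xhat c}) = eps"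
        using Bpoint_measure by simp
      then show ?thesis unfolding kl by simp
    qed
  qed
  have opt: "(\<integral>z. F z \<partial>Q) \<le> (\<integral>z. F z \<partial>Qs)" if Q: "Q \<in> ambiguity_set nu h T MX C xhat phat thetahat rho eps" for Q
  proof -
    from Q obtain QX \<theta> where Qp: "prob_space Q" and Qsets: "sets Q = sets (MX \<Otimes>\<^sub>M nu)"
      and QXp: "prob_space QX" and QXs: "sets QX = sets MX"
      and thT: "\<forall>c<C. \<theta> c \<in> expfam_Theta nu h T"
      and rect: "\<forall>c<C. \<forall>A\<in>sets nu. emeasure Q ({xhat c} \<times> A) = emeasure QX {xhat c} * emeasure (expfam_dist nu h T (\<theta> c)) A"
      and KLc: "\<forall>c<C. KL_div (expfam_dist nu h T (\<theta> c)) (expfam_dist nu h T (thetahat c)) \<le> ereal (rho c)"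
      and bud: "KL_div QX (nominal_X MX C xhat phat) + ereal (\<Sum>c<C. rho c * measure QX {xhat c}) \<le> ereal eps"
      unfolding ambiguity_set_def by blast
    interpret QXP: prob_space QX by fact
    have "KL_div QX (nominal_X MX C xhat phat) \<noteq> \<infinity>"
    proof
      assume "KL_div QX (nominal_X MX C xhat phat) = \<infinity>"
      then show False using bud by simp
    qed
    then have ac: "absolutely_continuous (X.B phat) QX"
      unfolding nom by (auto simp: KL_div_def split: if_splits)
    define q' where "q' c = measure QX {xhat c}" for c
    have q'_nn: "\<forall>c<C. q' c \<ge> 0" by (simp add: q'_def)
    have ch: "\<forall>c<C. phat c = 0 \<longrightarrow> q' c = 0"
      "\<forall>A\<in>sets MX. emeasure QX A = (\<Sum>c<C. ennreal (q' c) * indicator A (xhat c))"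
      "(\<Sum>c<C. q' c) = 1"
      using X.QX_char[OF phat_nonneg QXp QXs ac] by (simp_all add: q'_def)
    have QXB: "QX = X.B q'"
    proof (rule measure_eqI)
      show "sets QX = sets (X.B q')" using QXs X.B_sets[OF q'_nn] by simp
      fix A assume "A \<in> sets QX"
      then have A: "A \<in> sets MX" using QXs by simp
      show "emeasure QX A = emeasure (X.B q') A" using ch(2) A X.B_emeasure[OF q'_nn A] by simp
    qed
    have klq: "KL_div QX (nominal_X MX C xhat phat) = ereal (\<Sum>c<C. q' c * ln (q' c / phat c))"
      unfolding nom QXB by (rule X.disc_KL[OF phat_nonneg phat_sum q'_nn ch(1)])
    have bud': "(\<Sum>c<C. q' c * ln (q' c / phat c)) + (\<Sum>c<C. rho c * q' c) \<le> eps"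
      using bud unfolding klq by (simp add: q'_def)
    have gib: "(\<Sum>c<C. q' c * (a c - ln (q' c / phat c))) \<le> (\<Sum>c<C. phat c * exp (a c) - q' c)"
      using gibbs_term phat_nonneg q'_nn ch(1) by (intro sum_mono) auto
    also have "\<dots> = 0" using q_sum ch(3) by (simp add: sum_subtractf q_def)
    finally have "(\<Sum>c<C. q' c * a c) \<le> (\<Sum>c<C. q' c * ln (q' c / phat c))"
      by (simp add: right_diff_distrib sum_subtractf)
    then have "inverse beta * (\<Sum>c<C. q' c * (ts c - alpha)) \<le> eps + 1"
      using bud' unfolding sum_qa ch(3) by linarith
    then have "(\<Sum>c<C. q' c * (ts c - alpha)) \<le> (eps + 1) * beta"
      using beta_pos by (simp add: field_simps)
    then have tsle: "(\<Sum>c<C. q' c * ts c) \<le> (\<Sum>c<C. q c * ts c)"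
      using sum_ts[of q', OF ch(3)] sum_ts[of q, OF q_sum] q_ts by linarith
    have rect': "\<forall>c<C. \<forall>A\<in>sets nu. emeasure Q ({xhat c} \<times> A) = ennreal (q' c) * emeasure (expfam_dist nu h T (\<theta> c)) A"
      using rect by (simp add: q'_def QXP.emeasure_eq_measure)
    have Kt: "\<forall>c<C. prob_space (expfam_dist nu h T (\<theta> c)) \<and> sets (expfam_dist nu h T (\<theta> c)) = sets nu"
      using thT E.D_prob E.sets_D by simp
    have Qem: "\<forall>S\<in>sets (MX \<Otimes>\<^sub>M nu). emeasure Q S = (\<Sum>c<C. ennreal (q' c) * emeasure (return MX (xhat c) \<Otimes>\<^sub>M expfam_dist nu h T (\<theta> c)) S)"
      by (rule X.Q_decomp[OF Qp Qsets Kt q'_nn ch(3) rect'])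
    have Qint: "integrable Q F \<and> (\<integral>z. F z \<partial>Q) = (\<Sum>c<C. q' c * (E.Ps (lc c) - E.mean (\<theta> c) \<bullet> lc c))"
      by (rule mix_loss[OF E.ef_axioms X.disc_axioms q'_nn thT Fm Fc Qsets Qem])
    have "(\<Sum>c<C. q' c * (E.Ps (lc c) - E.mean (\<theta> c) \<bullet> lc c)) \<le> (\<Sum>c<C. q' c * ts c)"
    proof (intro sum_mono mult_left_mono)
      fix c assume "c \<in> {..<C}"
      then have c: "c < C" by simp
      have "E.mean (thetas c) \<bullet> lc c \<le> E.mean (\<theta> c) \<bullet> lc c"
        using thT thetahat_in gam_pos thd thetas_in gam' KLc c by (intro E.per_c) auto
      then show "E.Ps (lc c) - E.mean (\<theta> c) \<bullet> lc c \<le> ts c" using tsd c by simp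
      show "0 \<le> q' c" by (simp add: q'_def)
    qed
    also have "\<dots> \<le> (\<Sum>c<C. q c * ts c)" by (rule tsle)
    finally show ?thesis using Qint Qs_val by simp
  qed
  show ?thesis
    unfolding qeq Keq Qs_def[symmetric] F_def[symmetric]
    using mem Qs_int opt by blast
qed


end
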